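(* Let $f$ be a real ternary cubic form and $g$ its AMWP metric on $\mathbb{R}^3+iW$. Then at every point: <ul> <li>every holomorphic bisectional curvature satisfies $B(X,Y)\ge-2$;</li> <li>every holomorphic sectional curvature satisfies $B(X,X)\ge-2$;</li> <li>every Ricci curvature satisfies $\mathrm{Ric}(X)\ge-4$ for unit $X$;</li> <li>the scalar curvature is $\ge-12$.</li> </ul>
   Context: Let $f(y_1,y_2,y_3)$ be a real cubic form. Its index cone $W$ is the open cone of $y$ with $f(y)>0$ at which the Hessian $(\partial^2f/\partial y_i\partial y_j)$ has signature $(1,2)$. The AMWP metric is the Kähler metric on $\mathbb{R}^3+iW$ (coordinates $t_j=x_j+iy_j$) with potential $-\log f(y)$, i.e. $g_{i\bar j}=-\tfrac14\partial^2\log f/\partial y_i\partial y_j$. Its curvature tensor is $$R_{i\bar jk\bar l}=\partial^2 g_{i\bar j}/\partial t_k\partial\bar t_l-\sum_{d,e}g^{\bar e d}(\partial g_{i\bar e}/\partial t_k)(\partial g_{\bar jd}/\partial\bar t_l).$$ For nonzero $(1,0)$-vectors $X,Y$, the holomorphic bisectional curvature is $B(X,Y)=-R(X,\bar X,Y,\bar Y)/(g(X,\bar X)g(Y,\bar Y))$, and the holomorphic sectional curvature is $B(X,X)$. With these conventions the metric with potential $-\log \mathrm{Im}\,t$ on the upper half plane has curvature $-2$. For a unit vector $X$, $\mathrm{Ric}(X)=\sum_jB(X,e_j)$ over a unitary frame $e_j$. The scalar curvature is $\sum_i\mathrm{Ric}(e_i)$. *)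

theory Defs
  imports "HOL-Analysis.Analysis"
begin

definition pd :: "('a::real_normed_vector \<Rightarrow> 'b::real_normed_vector) \<Rightarrow> 'a \<Rightarrow> 'a \<Rightarrow> 'b" where
  "pd F v p = vector_derivative (\<lambda>s::real. F (p + s *\<^sub>R v)) (at 0)"

text \<open>A real ternary cubic form, given by a coefficient tensor c:
  f(y) = sum over i,j,k of c i j k y_i y_j y_k (every cubic form arises this way).\<close>
definition cubic :: "(3 \<Rightarrow> 3 \<Rightarrow> 3 \<Rightarrow> real) \<Rightarrow> real^3 \<Rightarrow> real" where
  "cubic c y = (\<Sum>i\<in>UNIV. \<Sum>j\<in>UNIV. \<Sum>k\<in>UNIV. c i j k * y$i * y$j * y$k)"

definition hessian :: "(real^3 \<Rightarrow> real) \<Rightarrow> real^3 \<Rightarrow> real^3^3" where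
  "hessian F y = (\<chi> i j. pd (\<lambda>z. pd F (axis j 1) z) (axis i 1) y)"

definition signature_1_2 :: "real^3^3 \<Rightarrow> bool" where
  "signature_1_2 H \<longleftrightarrow> (\<exists>l1 l2 l3. l1 > 0 \<and> l2 < 0 \<and> l3 < 0 \<and>
      (\<forall>x. det (x *\<^sub>R mat 1 - H) = (x - l1) * (x - l2) * (x - l3)))"

definition index_cone :: "(real^3 \<Rightarrow> real) \<Rightarrow> (real^3) set" where
  "index_cone f = {y. f y > 0 \<and> signature_1_2 (hessian f y)}"

definition Imv :: "complex^3 \<Rightarrow> real^3" where
  "Imv t = (\<chi> i. Im (t$i))"

definition dt :: "3 \<Rightarrow> (complex^3 \<Rightarrow> complex) \<Rightarrow> complex^3 \<Rightarrow> complex" where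
  "dt k F t = (pd F (axis k 1) t - \<i> * pd F (axis k \<i>) t) / 2"

definition dtb :: "3 \<Rightarrow> (complex^3 \<Rightarrow> complex) \<Rightarrow> complex^3 \<Rightarrow> complex" where
  "dtb k F t = (pd F (axis k 1) t + \<i> * pd F (axis k \<i>) t) / 2"

definition amwp_g :: "(real^3 \<Rightarrow> real) \<Rightarrow> 3 \<Rightarrow> 3 \<Rightarrow> complex^3 \<Rightarrow> complex" where
  "amwp_g f i j t = complex_of_real (- (1/4) * hessian (\<lambda>y. ln (f y)) (Imv t) $ i $ j)"

definition amwp_ginv :: "(real^3 \<Rightarrow> real) \<Rightarrow> 3 \<Rightarrow> 3 \<Rightarrow> complex^3 \<Rightarrow> complex" where
  "amwp_ginv f e d t = matrix_inv (\<chi> i j. amwp_g f i j t) $ e $ d"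

definition amwp_R :: "(real^3 \<Rightarrow> real) \<Rightarrow> 3 \<Rightarrow> 3 \<Rightarrow> 3 \<Rightarrow> 3 \<Rightarrow> complex^3 \<Rightarrow> complex" where
  "amwp_R f i j k l t =
     dt k (dtb l (amwp_g f i j)) t
     - (\<Sum>d\<in>UNIV. \<Sum>e\<in>UNIV. amwp_ginv f e d t * dt k (amwp_g f i e) t * dtb l (amwp_g f d j) t)"

definition gform :: "(real^3 \<Rightarrow> real) \<Rightarrow> complex^3 \<Rightarrow> complex^3 \<Rightarrow> complex^3 \<Rightarrow> complex" where
  "gform f t X Y = (\<Sum>i\<in>UNIV. \<Sum>j\<in>UNIV. amwp_g f i j t * X$i * cnj (Y$j))"

definition Rform :: "(real^3 \<Rightarrow> real) \<Rightarrow> complex^3 \<Rightarrow> complex^3 \<Rightarrow> complex^3 \<Rightarrow> complex" where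
  "Rform f t X Y = (\<Sum>i\<in>UNIV. \<Sum>j\<in>UNIV. \<Sum>k\<in>UNIV. \<Sum>l\<in>UNIV.
      amwp_R f i j k l t * X$i * cnj (X$j) * Y$k * cnj (Y$l))"

definition bisec :: "(real^3 \<Rightarrow> real) \<Rightarrow> complex^3 \<Rightarrow> complex^3 \<Rightarrow> complex^3 \<Rightarrow> real" where
  "bisec f t X Y = Re (- Rform f t X Y / (gform f t X X * gform f t Y Y))"

definition unitary_frame :: "(real^3 \<Rightarrow> real) \<Rightarrow> complex^3 \<Rightarrow> (3 \<Rightarrow> complex^3) \<Rightarrow> bool" where
  "unitary_frame f t e \<longleftrightarrow> (\<forall>a b. gform f t (e a) (e b) = (if a = b then 1 else 0))"

definition ricci :: "(real^3 \<Rightarrow> real) \<Rightarrow> complex^3 \<Rightarrow> (3 \<Rightarrow> complex^3) \<Rightarrow> complex^3 \<Rightarrow> real" where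
  "ricci f t e X = (\<Sum>a\<in>UNIV. bisec f t X (e a))"

definition scalar_curv :: "(real^3 \<Rightarrow> real) \<Rightarrow> complex^3 \<Rightarrow> (3 \<Rightarrow> complex^3) \<Rightarrow> real" where
  "scalar_curv f t e = (\<Sum>a\<in>UNIV. ricci f t e (e a))"

end

theory Submission
  imports Defs
begin

lemma pd_has_derivative:
  assumes "(F has_derivative F') (at p)"
  shows "pd F v p = F' v"
proof -
  have l: "((\<lambda>s::real. p + s *\<^sub>R v) has_derivative (\<lambda>s. s *\<^sub>R v)) (at 0)"
    by (auto intro!: derivative_eq_intros)
  have "((\<lambda>s::real. F (p + s *\<^sub>R v)) has_derivative (\<lambda>s. F' (s *\<^sub>R v))) (at 0)"
    using has_derivative_compose[OF l] assms by simp
  moreover have "(\<lambda>s. F' (s *\<^sub>R v)) = (\<lambda>s. s *\<^sub>R F' v)"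
    using assms has_derivative_bounded_linear linear_scale linear_simps(5) by (metis (no_types, lifting) bounded_linear.linear)
  ultimately have "((\<lambda>s::real. F (p + s *\<^sub>R v)) has_vector_derivative F' v) (at 0)"
    unfolding has_vector_derivative_def by simp
  then show ?thesis unfolding pd_def by (rule vector_derivative_at)
qed

lemma pd_local:
  assumes "open S" "p \<in> S" "\<And>z. z \<in> S \<Longrightarrow> F z = G z" "(G has_derivative G') (at p)"
  shows "pd F v p = G' v"
proof -
  have "(F has_derivative G') (at p)"
    by (rule has_derivative_transform_within_open[OF assms(4) assms(1,2)]) (simp add: assms(3))
  then show ?thesis by (rule pd_has_derivative)
qed

definition T3 :: "(3\<Rightarrow>3\<Rightarrow>3\<Rightarrow>real) \<Rightarrow> 3\<Rightarrow>3\<Rightarrow>3\<Rightarrow>real" where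
  "T3 c i j k = c i j k + c i k j + c j i k + c j k i + c k i j + c k j i"
definition D1 :: "(3\<Rightarrow>3\<Rightarrow>3\<Rightarrow>real) \<Rightarrow> real^3 \<Rightarrow> 3 \<Rightarrow> real" where
  "D1 c y i = (\<Sum>j\<in>UNIV. \<Sum>k\<in>UNIV. T3 c i j k * y$j * y$k) / 2"
definition D2 :: "(3\<Rightarrow>3\<Rightarrow>3\<Rightarrow>real) \<Rightarrow> real^3 \<Rightarrow> 3 \<Rightarrow> 3 \<Rightarrow> real" where
  "D2 c y i j = (\<Sum>k\<in>UNIV. T3 c i j k * y$k)"

lemma hd_nth: "((\<lambda>x::real^'n. x$i) has_derivative (\<lambda>h. h$i)) F"
  by (rule bounded_linear.has_derivative[OF bounded_linear_vec_nth]) (auto intro: has_derivative_ident)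

lemma cubic_deriv: "(cubic c has_derivative (\<lambda>h. \<Sum>i\<in>UNIV. D1 c y i * h$i)) (at y)"
proof -
  have "(cubic c has_derivative (\<lambda>h. \<Sum>i\<in>UNIV. \<Sum>j\<in>UNIV. \<Sum>k\<in>UNIV.
      c i j k * (h$i * y$j * y$k + y$i * h$j * y$k + y$i * y$j * h$k))) (at y)"
    unfolding cubic_def[abs_def]
    apply (intro has_derivative_sum)
    by (auto intro!: derivative_eq_intros hd_nth simp: algebra_simps)
  moreover have "(\<lambda>h. \<Sum>i\<in>UNIV. \<Sum>j\<in>UNIV. \<Sum>k\<in>UNIV.
      c i j k * (h$i * y$j * y$k + y$i * h$j * y$k + y$i * y$j * h$k)) = (\<lambda>h. \<Sum>i\<in>UNIV. D1 c y i * h$i)"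
    by (rule ext) (simp add: sum_3 D1_def T3_def field_simps; algebra)
  ultimately show ?thesis by simp
qed

lemma T3_sym1: "T3 c j i k = T3 c i j k" unfolding T3_def by simp
lemma T3_sym2: "T3 c i k j = T3 c i j k" unfolding T3_def by simp
lemma D2_sym: "D2 c y j i = D2 c y i j" unfolding D2_def by (simp add: T3_sym1)

lemma D1_deriv: "((\<lambda>y. D1 c y i) has_derivative (\<lambda>h. \<Sum>j\<in>UNIV. D2 c y i j * h$j)) (at y)"
proof -
  have "((\<lambda>y. D1 c y i) has_derivative (\<lambda>h. (\<Sum>j\<in>UNIV. \<Sum>k\<in>UNIV.
      T3 c i j k * (h$j * y$k + y$j * h$k)) / 2)) (at y)"
    unfolding D1_def[abs_def]
    by (auto intro!: derivative_eq_intros hd_nth simp: algebra_simps)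
  moreover have "(\<lambda>h. (\<Sum>j\<in>UNIV. \<Sum>k\<in>UNIV.
      T3 c i j k * (h$j * y$k + y$j * h$k)) / 2) = (\<lambda>h. \<Sum>j\<in>UNIV. D2 c y i j * h$j)"
    by (rule ext) (simp add: sum_3 D2_def T3_sym1 T3_sym2 field_simps; algebra)
  ultimately show ?thesis by simp
qed

lemma D2_deriv: "((\<lambda>y. D2 c y i j) has_derivative (\<lambda>h. \<Sum>k\<in>UNIV. T3 c i j k * h$k)) (at y)"
  unfolding D2_def[abs_def]
  by (auto intro!: derivative_eq_intros hd_nth simp: algebra_simps)

definition L1 :: "(3\<Rightarrow>3\<Rightarrow>3\<Rightarrow>real) \<Rightarrow> 3 \<Rightarrow> real^3 \<Rightarrow> real" where
  "L1 c i y = D1 c y i / cubic c y"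
definition L2 :: "(3\<Rightarrow>3\<Rightarrow>3\<Rightarrow>real) \<Rightarrow> 3 \<Rightarrow> 3 \<Rightarrow> real^3 \<Rightarrow> real" where
  "L2 c i j y = D2 c y i j / cubic c y - D1 c y i * D1 c y j / (cubic c y)^2"
definition L3 :: "(3\<Rightarrow>3\<Rightarrow>3\<Rightarrow>real) \<Rightarrow> 3 \<Rightarrow> 3 \<Rightarrow> 3 \<Rightarrow> real^3 \<Rightarrow> real" where
  "L3 c i j k y = T3 c i j k / cubic c y
     - (D2 c y i j * D1 c y k + D2 c y i k * D1 c y j + D2 c y j k * D1 c y i) / (cubic c y)^2
     + 2 * D1 c y i * D1 c y j * D1 c y k / (cubic c y)^3"
definition L4 :: "(3\<Rightarrow>3\<Rightarrow>3\<Rightarrow>real) \<Rightarrow> 3 \<Rightarrow> 3 \<Rightarrow> 3 \<Rightarrow> 3 \<Rightarrow> real^3 \<Rightarrow> real" where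
  "L4 c i j k l y =
     - (T3 c i j k * D1 c y l + T3 c i j l * D1 c y k + T3 c i k l * D1 c y j + T3 c j k l * D1 c y i) / (cubic c y)^2
     - (D2 c y i j * D2 c y k l + D2 c y i k * D2 c y j l + D2 c y i l * D2 c y j k) / (cubic c y)^2
     + 2 * (D2 c y i j * D1 c y k * D1 c y l + D2 c y i k * D1 c y j * D1 c y l
          + D2 c y i l * D1 c y j * D1 c y k + D2 c y j k * D1 c y i * D1 c y l
          + D2 c y j l * D1 c y i * D1 c y k + D2 c y k l * D1 c y i * D1 c y j) / (cubic c y)^3
     - 6 * D1 c y i * D1 c y j * D1 c y k * D1 c y l / (cubic c y)^4"

lemma ln_deriv: assumes "cubic c y > 0"
  shows "((\<lambda>y. ln (cubic c y)) has_derivative (\<lambda>h. \<Sum>j\<in>UNIV. L1 c j y * h$j)) (at y)"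
proof -
  have "((\<lambda>y. ln (cubic c y)) has_derivative (\<lambda>h. (\<Sum>i\<in>UNIV. D1 c y i * h$i) / cubic c y)) (at y)"
    using assms by (auto intro!: derivative_eq_intros cubic_deriv simp: field_simps)
  moreover have "(\<lambda>h. (\<Sum>i\<in>UNIV. D1 c y i * h$i) / cubic c y) = (\<lambda>h. \<Sum>j\<in>UNIV. L1 c j y * h$j)"
    by (rule ext) (simp add: sum_3 L1_def add_divide_distrib)
  ultimately show ?thesis by simp
qed

lemma L1_deriv: assumes "cubic c y \<noteq> 0"
  shows "((\<lambda>y. L1 c j y) has_derivative (\<lambda>h. \<Sum>i\<in>UNIV. L2 c j i y * h$i)) (at y)"
proof -
  have "((\<lambda>y. L1 c j y) has_derivative (\<lambda>h. ((\<Sum>i\<in>UNIV. D2 c y j i * h$i) * cubic c y - D1 c y j * (\<Sum>i\<in>UNIV. D1 c y i * h$i)) / (cubic c y)^2)) (at y)"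
    unfolding L1_def[abs_def]
    using assms by (auto intro!: derivative_eq_intros cubic_deriv D1_deriv simp: field_simps power2_eq_square)
  moreover have "(\<lambda>h. ((\<Sum>i\<in>UNIV. D2 c y j i * h$i) * cubic c y - D1 c y j * (\<Sum>i\<in>UNIV. D1 c y i * h$i)) / (cubic c y)^2) = (\<lambda>h. \<Sum>i\<in>UNIV. L2 c j i y * h$i)"
    using assms by (intro ext) (simp add: sum_3 L2_def field_simps; algebra)
  ultimately show ?thesis by simp
qed

lemma L2_deriv: assumes "cubic c y \<noteq> 0"
  shows "((\<lambda>y. L2 c i j y) has_derivative (\<lambda>h. \<Sum>k\<in>UNIV. L3 c i j k y * h$k)) (at y)"
proof -
  have "((\<lambda>y. L2 c i j y) has_derivative (\<lambda>h.
     (\<Sum>k\<in>UNIV. T3 c i j k * h$k) / cubic c y - D2 c y i j * (\<Sum>k\<in>UNIV. D1 c y k * h$k) / (cubic c y)^2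
     - ((\<Sum>k\<in>UNIV. D2 c y i k * h$k) * D1 c y j + D1 c y i * (\<Sum>k\<in>UNIV. D2 c y j k * h$k)) / (cubic c y)^2
     + 2 * D1 c y i * D1 c y j * (\<Sum>k\<in>UNIV. D1 c y k * h$k) / (cubic c y)^3)) (at y)"
    unfolding L2_def[abs_def]
    apply (rule has_derivative_eq_rhs)
    using assms apply (auto intro!: derivative_eq_intros cubic_deriv D1_deriv D2_deriv)[1]
    using assms by (intro ext) (simp add: field_simps power2_eq_square power3_eq_cube; algebra)
  moreover have "(\<lambda>h.
     (\<Sum>k\<in>UNIV. T3 c i j k * h$k) / cubic c y - D2 c y i j * (\<Sum>k\<in>UNIV. D1 c y k * h$k) / (cubic c y)^2
     - ((\<Sum>k\<in>UNIV. D2 c y i k * h$k) * D1 c y j + D1 c y i * (\<Sum>k\<in>UNIV. D2 c y j k * h$k)) / (cubic c y)^2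
     + 2 * D1 c y i * D1 c y j * (\<Sum>k\<in>UNIV. D1 c y k * h$k) / (cubic c y)^3) = (\<lambda>h. \<Sum>k\<in>UNIV. L3 c i j k y * h$k)"
    using assms by (intro ext) (simp add: sum_3 L3_def field_simps; algebra)
  ultimately show ?thesis by simp
qed

lemma L3_deriv: assumes "cubic c y \<noteq> 0"
  shows "((\<lambda>y. L3 c i j k y) has_derivative (\<lambda>h. \<Sum>l\<in>UNIV. L4 c i j k l y * h$l)) (at y)"
  unfolding L3_def[abs_def]
  apply (rule has_derivative_eq_rhs)
  using assms apply (auto intro!: derivative_eq_intros cubic_deriv D1_deriv D2_deriv)[1]
  using assms by (intro ext) (simp add: sum_3 L4_def T3_sym1 T3_sym2 D2_sym field_simps power2_eq_square power3_eq_cube; algebra)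

lemma pd_local':
  assumes "open S" "p \<in> S" "\<And>z. z \<in> S \<Longrightarrow> F z = G z"
  shows "pd F v p = pd G v p"
proof -
  let ?f = "\<lambda>s::real. F (p + s *\<^sub>R v)" and ?g = "\<lambda>s::real. G (p + s *\<^sub>R v)"
  let ?S = "{s::real. p + s *\<^sub>R v \<in> S}"
  have oS: "open ?S"
  proof -
    have "continuous_on UNIV (\<lambda>s::real. p + s *\<^sub>R v)" by (intro continuous_intros)
    then have "open ((\<lambda>s::real. p + s *\<^sub>R v) -` S)"
      using continuous_on_open_vimage[OF open_UNIV] assms(1) by auto
    then show ?thesis by (simp add: vimage_def)
  qed
  have 0: "0 \<in> ?S" using assms(2) by simp
  have eq: "\<And>s. s \<in> ?S \<Longrightarrow> ?f s = ?g s" using assms(3) by simp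
  have "\<And>d. (?f has_vector_derivative d) (at 0) \<longleftrightarrow> (?g has_vector_derivative d) (at 0)"
  proof
    fix d assume "(?f has_vector_derivative d) (at 0)"
    then show "(?g has_vector_derivative d) (at 0)"
      by (rule has_vector_derivative_transform_within_open[OF _ oS 0]) (rule eq)
  next
    fix d assume "(?g has_vector_derivative d) (at 0)"
    then show "(?f has_vector_derivative d) (at 0)"
      by (rule has_vector_derivative_transform_within_open[OF _ oS 0]) (rule eq[symmetric])
  qed
  then show ?thesis unfolding pd_def vector_derivative_def by simp
qed

lemma Imv_add: "Imv (a + b) = Imv a + Imv b" unfolding Imv_def by (simp add: vec_eq_iff)
lemma Imv_scaleR: "Imv (s *\<^sub>R a) = s *\<^sub>R Imv a" unfolding Imv_def by (simp add: vec_eq_iff)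
lemma Imv_axis1: "Imv (axis k 1) = 0" unfolding Imv_def axis_def by (simp add: vec_eq_iff)
lemma Imv_axisi: "Imv (axis k \<i>) = axis k 1" unfolding Imv_def axis_def by (simp add: vec_eq_iff)

lemma cont_Imv: "continuous_on UNIV Imv"
  unfolding Imv_def by (intro continuous_on_vec_lambda continuous_intros)

lemma pd_Imv: "pd (\<lambda>t. F (Imv t)) v t = pd F (Imv v) (Imv t)"
  unfolding pd_def by (simp add: Imv_add Imv_scaleR)

lemma pd_Imv_key:
  assumes "open S" "Imv t \<in> S" "\<And>t'. Imv t' \<in> S \<Longrightarrow> A t' = F (Imv t')"
    "(F has_derivative F') (at (Imv t))"
  shows "pd A v t = F' (Imv v)"
proof -
  have o: "open (Imv -` S)" using continuous_on_open_vimage[OF open_UNIV] cont_Imv assms(1) by auto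
  have "pd A v t = pd (\<lambda>t. F (Imv t)) v t"
    by (rule pd_local'[OF o]) (use assms in auto)
  also have "\<dots> = F' (Imv v)" unfolding pd_Imv by (rule pd_has_derivative[OF assms(4)])
  finally show ?thesis .
qed

lemma linear0: "(F has_derivative F') net \<Longrightarrow> F' 0 = 0"
  using has_derivative_bounded_linear linear_simps(3) by (metis bounded_linear.linear)

lemma dt_key:
  assumes "open S" "Imv t \<in> S" "\<And>t'. Imv t' \<in> S \<Longrightarrow> A t' = F (Imv t')"
    "(F has_derivative F') (at (Imv t))"
  shows "dt k A t = - \<i> * F' (axis k 1) / 2" "dtb k A t = \<i> * F' (axis k 1) / 2"
  using pd_Imv_key[OF assms, of "axis k 1"] pd_Imv_key[OF assms, of "axis k \<i>"]
  unfolding dt_def dtb_def Imv_axis1 Imv_axisi linear0[OF assms(4)] by simp_all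

lemma sum_axis: "(\<Sum>i\<in>UNIV. f i * (axis j 1 :: real^3) $ i) = f j"
proof -
  have "\<And>i. f i * (axis j 1 :: real^3) $ i = (if j = i then f i else 0)" by (simp add: axis_def)
  then show ?thesis by simp
qed

lemma hess_cubic: "hessian (cubic c) y $ i $ j = D2 c y i j"
proof -
  have inner: "pd (cubic c) (axis j 1) = (\<lambda>z. D1 c z j)"
    using pd_has_derivative[OF cubic_deriv] sum_axis by auto
  show ?thesis unfolding hessian_def
    by (simp add: inner pd_has_derivative[OF D1_deriv] sum_axis D2_sym)
qed

lemma open_pos: "open {z. cubic c z > 0}"
proof -
  have "continuous_on UNIV (cubic c)"
    by (intro continuous_at_imp_continuous_on ballI has_derivative_continuous[OF cubic_deriv])
  then have "open (cubic c -` {0<..})"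
    by (simp add: continuous_on_open_vimage[OF open_UNIV])
  then show ?thesis by (simp add: vimage_def)
qed

lemma hess_ln: assumes "cubic c y > 0"
  shows "hessian (\<lambda>y. ln (cubic c y)) y $ i $ j = L2 c j i y"
proof -
  have inner: "\<And>z. z \<in> {z. cubic c z > 0} \<Longrightarrow> pd (\<lambda>y. ln (cubic c y)) (axis j 1) z = L1 c j z"
    using pd_has_derivative[OF ln_deriv] sum_axis by simp
  have "pd (\<lambda>z. pd (\<lambda>y. ln (cubic c y)) (axis j 1) z) (axis i 1) y = (\<Sum>k\<in>UNIV. L2 c j k y * axis i 1 $ k)"
    by (rule pd_local[OF open_pos _ inner L1_deriv]) (use assms in auto)
  then show ?thesis unfolding hessian_def by (simp add: sum_axis)
qed

lemma g_eq: assumes "cubic c (Imv t) > 0"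
  shows "amwp_g (cubic c) i j t = complex_of_real (- (1/4) * L2 c j i (Imv t))"
  unfolding amwp_g_def using hess_ln[OF assms] by simp

lemma dg:
  assumes "cubic c (Imv t) > 0"
  shows "dt k (amwp_g (cubic c) i j) t = - \<i> * complex_of_real (- (1/4) * L3 c j i k (Imv t)) / 2"
        "dtb k (amwp_g (cubic c) i j) t = \<i> * complex_of_real (- (1/4) * L3 c j i k (Imv t)) / 2"
proof -
  have d: "((\<lambda>y. complex_of_real (- (1/4) * L2 c j i y)) has_derivative
     (\<lambda>h. complex_of_real (- (1/4) * (\<Sum>k\<in>UNIV. L3 c j i k (Imv t) * h$k)))) (at (Imv t))"
    using assms by (auto intro!: derivative_eq_intros L2_deriv)
  have e: "\<And>t'. Imv t' \<in> {z. cubic c z > 0} \<Longrightarrow> amwp_g (cubic c) i j t' = complex_of_real (- (1/4) * L2 c j i (Imv t'))"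
    using g_eq by simp
  show "dt k (amwp_g (cubic c) i j) t = - \<i> * complex_of_real (- (1/4) * L3 c j i k (Imv t)) / 2"
    using dt_key(1)[OF open_pos _ e d] assms by (simp add: sum_axis)
  show "dtb k (amwp_g (cubic c) i j) t = \<i> * complex_of_real (- (1/4) * L3 c j i k (Imv t)) / 2"
    using dt_key(2)[OF open_pos _ e d] assms by (simp add: sum_axis)
qed

lemma ddg:
  assumes "cubic c (Imv t) > 0"
  shows "dt k (dtb l (amwp_g (cubic c) i j)) t = - complex_of_real (L4 c j i l k (Imv t)) / 16"
proof -
  have d: "((\<lambda>y. \<i> * complex_of_real (- (1/4) * L3 c j i l y) / 2) has_derivative
     (\<lambda>h. \<i> * complex_of_real (- (1/4) * (\<Sum>m\<in>UNIV. L4 c j i l m (Imv t) * h$m)) / 2)) (at (Imv t))"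
    using assms by (auto intro!: derivative_eq_intros L3_deriv)
  have e: "\<And>t'. Imv t' \<in> {z. cubic c z > 0} \<Longrightarrow> dtb l (amwp_g (cubic c) i j) t' = \<i> * complex_of_real (- (1/4) * L3 c j i l (Imv t')) / 2"
    using dg by simp
  show ?thesis
    using dt_key(1)[OF open_pos _ e d] assms by (simp add: sum_axis)
qed

lemma R_eq:
  assumes "cubic c (Imv t) > 0"
  shows "amwp_R (cubic c) i j k l t = - complex_of_real (L4 c j i l k (Imv t)) / 16
     - (\<Sum>d\<in>UNIV. \<Sum>e\<in>UNIV. amwp_ginv (cubic c) e d t * complex_of_real (L3 c e i k (Imv t))
          * complex_of_real (L3 c j d l (Imv t))) / 64"
  unfolding amwp_R_def ddg[OF assms] dg[OF assms]
  by (simp add: sum_divide_distrib algebra_simps)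

definition lin :: "(3\<Rightarrow>3\<Rightarrow>3\<Rightarrow>real) \<Rightarrow> real^3 \<Rightarrow> complex^3 \<Rightarrow> complex" where
  "lin c y A = (\<Sum>i\<in>UNIV. of_real (D1 c y i) * A$i)"
definition bil :: "(3\<Rightarrow>3\<Rightarrow>3\<Rightarrow>real) \<Rightarrow> real^3 \<Rightarrow> complex^3 \<Rightarrow> complex^3 \<Rightarrow> complex" where
  "bil c y A B = (\<Sum>i\<in>UNIV. \<Sum>j\<in>UNIV. of_real (D2 c y i j) * A$i * B$j)"
definition tri :: "(3\<Rightarrow>3\<Rightarrow>3\<Rightarrow>real) \<Rightarrow> complex^3 \<Rightarrow> complex^3 \<Rightarrow> complex^3 \<Rightarrow> complex" where
  "tri c A B C = (\<Sum>i\<in>UNIV. \<Sum>j\<in>UNIV. \<Sum>k\<in>UNIV. of_real (T3 c i j k) * A$i * B$j * C$k)"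

lemma E2: "(\<Sum>k\<in>UNIV. D2 c y i k * y$k) = 2 * D1 c y i"
  unfolding D2_def D1_def by (simp add: sum_3 field_simps)
lemma E3: "(\<Sum>i\<in>UNIV. D1 c y i * y$i) = 3 * cubic c y"
  unfolding D1_def cubic_def T3_def by (simp add: sum_3 field_simps; algebra)

definition C4 :: "(3\<Rightarrow>3\<Rightarrow>3\<Rightarrow>3\<Rightarrow>complex) \<Rightarrow> complex^3 \<Rightarrow> complex^3 \<Rightarrow> complex^3 \<Rightarrow> complex^3 \<Rightarrow> complex" where
  "C4 F A B C D = (\<Sum>p\<in>UNIV. \<Sum>q\<in>UNIV. \<Sum>r\<in>UNIV. \<Sum>s\<in>UNIV. F p q r s * A$p * B$q * C$r * D$s)"

lemma C4_add: "C4 (\<lambda>p q r s. F p q r s + G p q r s) A B C D = C4 F A B C D + C4 G A B C D"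
  unfolding C4_def by (simp add: sum.distrib algebra_simps)
lemma C4_diff: "C4 (\<lambda>p q r s. F p q r s - G p q r s) A B C D = C4 F A B C D - C4 G A B C D"
  unfolding C4_def by (simp add: sum_subtractf algebra_simps)
lemma C4_neg: "C4 (\<lambda>p q r s. - F p q r s) A B C D = - C4 F A B C D"
  unfolding C4_def by (simp add: sum_negf)
lemma C4_mult: "C4 (\<lambda>p q r s. k * F p q r s) A B C D = k * C4 F A B C D"
  unfolding C4_def by (simp add: sum_distrib_left algebra_simps)
lemma C4_div: "C4 (\<lambda>p q r s. F p q r s / k) A B C D = C4 F A B C D / k"
  unfolding C4_def by (simp add: sum_divide_distrib algebra_simps)

lemma sh_pqr_s: "C4 (\<lambda>p q r s. f p q r * g s) A B C D = (\<Sum>p\<in>UNIV. \<Sum>q\<in>UNIV. \<Sum>r\<in>UNIV. f p q r * A$p * B$q * C$r) * (\<Sum>s\<in>UNIV. g s * D$s)"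
  unfolding C4_def by (simp add: sum_3 algebra_simps)
lemma sh_pqs_r: "C4 (\<lambda>p q r s. f p q s * g r) A B C D = (\<Sum>p\<in>UNIV. \<Sum>q\<in>UNIV. \<Sum>r\<in>UNIV. f p q r * A$p * B$q * D$r) * (\<Sum>s\<in>UNIV. g s * C$s)"
  unfolding C4_def by (simp add: sum_3 algebra_simps)
lemma sh_prs_q: "C4 (\<lambda>p q r s. f p r s * g q) A B C D = (\<Sum>p\<in>UNIV. \<Sum>q\<in>UNIV. \<Sum>r\<in>UNIV. f p q r * A$p * C$q * D$r) * (\<Sum>s\<in>UNIV. g s * B$s)"
  unfolding C4_def by (simp add: sum_3 algebra_simps)
lemma sh_qrs_p: "C4 (\<lambda>p q r s. f q r s * g p) A B C D = (\<Sum>p\<in>UNIV. \<Sum>q\<in>UNIV. \<Sum>r\<in>UNIV. f p q r * B$p * C$q * D$r) * (\<Sum>s\<in>UNIV. g s * A$s)"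
  unfolding C4_def by (simp add: sum_3 algebra_simps)
lemma sh_pq_rs: "C4 (\<lambda>p q r s. f p q * g r s) A B C D = (\<Sum>p\<in>UNIV. \<Sum>q\<in>UNIV. f p q * A$p * B$q) * (\<Sum>p\<in>UNIV. \<Sum>q\<in>UNIV. g p q * C$p * D$q)"
  unfolding C4_def by (simp add: sum_3 algebra_simps)
lemma sh_pr_qs: "C4 (\<lambda>p q r s. f p r * g q s) A B C D = (\<Sum>p\<in>UNIV. \<Sum>q\<in>UNIV. f p q * A$p * C$q) * (\<Sum>p\<in>UNIV. \<Sum>q\<in>UNIV. g p q * B$p * D$q)"
  unfolding C4_def by (simp add: sum_3 algebra_simps)
lemma sh_ps_qr: "C4 (\<lambda>p q r s. f p s * g q r) A B C D = (\<Sum>p\<in>UNIV. \<Sum>q\<in>UNIV. f p q * A$p * D$q) * (\<Sum>p\<in>UNIV. \<Sum>q\<in>UNIV. g p q * B$p * C$q)"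
  unfolding C4_def by (simp add: sum_3 algebra_simps)
lemma sh_pq_r_s: "C4 (\<lambda>p q r s. f p q * g r * h s) A B C D = (\<Sum>p\<in>UNIV. \<Sum>q\<in>UNIV. f p q * A$p * B$q) * (\<Sum>p\<in>UNIV. g p * C$p) * (\<Sum>p\<in>UNIV. h p * D$p)"
  unfolding C4_def by (simp add: sum_3 algebra_simps)
lemma sh_pr_q_s: "C4 (\<lambda>p q r s. f p r * g q * h s) A B C D = (\<Sum>p\<in>UNIV. \<Sum>q\<in>UNIV. f p q * A$p * C$q) * (\<Sum>p\<in>UNIV. g p * B$p) * (\<Sum>p\<in>UNIV. h p * D$p)"
  unfolding C4_def by (simp add: sum_3 algebra_simps)
lemma sh_ps_q_r: "C4 (\<lambda>p q r s. f p s * g q * h r) A B C D = (\<Sum>p\<in>UNIV. \<Sum>q\<in>UNIV. f p q * A$p * D$q) * (\<Sum>p\<in>UNIV. g p * B$p) * (\<Sum>p\<in>UNIV. h p * C$p)"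
  unfolding C4_def by (simp add: sum_3 algebra_simps)
lemma sh_qr_p_s: "C4 (\<lambda>p q r s. f q r * g p * h s) A B C D = (\<Sum>p\<in>UNIV. \<Sum>q\<in>UNIV. f p q * B$p * C$q) * (\<Sum>p\<in>UNIV. g p * A$p) * (\<Sum>p\<in>UNIV. h p * D$p)"
  unfolding C4_def by (simp add: sum_3 algebra_simps)
lemma sh_qs_p_r: "C4 (\<lambda>p q r s. f q s * g p * h r) A B C D = (\<Sum>p\<in>UNIV. \<Sum>q\<in>UNIV. f p q * B$p * D$q) * (\<Sum>p\<in>UNIV. g p * A$p) * (\<Sum>p\<in>UNIV. h p * C$p)"
  unfolding C4_def by (simp add: sum_3 algebra_simps)
lemma sh_rs_p_q: "C4 (\<lambda>p q r s. f r s * g p * h q) A B C D = (\<Sum>p\<in>UNIV. \<Sum>q\<in>UNIV. f p q * C$p * D$q) * (\<Sum>p\<in>UNIV. g p * A$p) * (\<Sum>p\<in>UNIV. h p * B$p)"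
  unfolding C4_def by (simp add: sum_3 algebra_simps)
lemma sh_p_q_r_s: "C4 (\<lambda>p q r s. g p * h q * k r * m s) A B C D = (\<Sum>p\<in>UNIV. g p * A$p) * (\<Sum>p\<in>UNIV. h p * B$p) * (\<Sum>p\<in>UNIV. k p * C$p) * (\<Sum>p\<in>UNIV. m p * D$p)"
  unfolding C4_def by (simp add: sum_3 algebra_simps)

lemma L4_fun: assumes "cubic c y \<noteq> 0"
  shows "(\<lambda>p q r s. complex_of_real (L4 c p q r s y)) = (\<lambda>p q r s.
     - ((\<lambda>p q r. complex_of_real (T3 c p q r)) p q r * (\<lambda>p. complex_of_real (D1 c y p)) s
      + (\<lambda>p q r. complex_of_real (T3 c p q r)) p q s * (\<lambda>p. complex_of_real (D1 c y p)) r
      + (\<lambda>p q r. complex_of_real (T3 c p q r)) p r s * (\<lambda>p. complex_of_real (D1 c y p)) q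
      + (\<lambda>p q r. complex_of_real (T3 c p q r)) q r s * (\<lambda>p. complex_of_real (D1 c y p)) p) / (complex_of_real (cubic c y))^2
     - ((\<lambda>p q. complex_of_real (D2 c y p q)) p q * (\<lambda>p q. complex_of_real (D2 c y p q)) r s
      + (\<lambda>p q. complex_of_real (D2 c y p q)) p r * (\<lambda>p q. complex_of_real (D2 c y p q)) q s
      + (\<lambda>p q. complex_of_real (D2 c y p q)) p s * (\<lambda>p q. complex_of_real (D2 c y p q)) q r) / (complex_of_real (cubic c y))^2
     + 2 * ((\<lambda>p q. complex_of_real (D2 c y p q)) p q * (\<lambda>p. complex_of_real (D1 c y p)) r * (\<lambda>p. complex_of_real (D1 c y p)) s
          + (\<lambda>p q. complex_of_real (D2 c y p q)) p r * (\<lambda>p. complex_of_real (D1 c y p)) q * (\<lambda>p. complex_of_real (D1 c y p)) s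
          + (\<lambda>p q. complex_of_real (D2 c y p q)) p s * (\<lambda>p. complex_of_real (D1 c y p)) q * (\<lambda>p. complex_of_real (D1 c y p)) r
          + (\<lambda>p q. complex_of_real (D2 c y p q)) q r * (\<lambda>p. complex_of_real (D1 c y p)) p * (\<lambda>p. complex_of_real (D1 c y p)) s
          + (\<lambda>p q. complex_of_real (D2 c y p q)) q s * (\<lambda>p. complex_of_real (D1 c y p)) p * (\<lambda>p. complex_of_real (D1 c y p)) r
          + (\<lambda>p q. complex_of_real (D2 c y p q)) r s * (\<lambda>p. complex_of_real (D1 c y p)) p * (\<lambda>p. complex_of_real (D1 c y p)) q)
        / (complex_of_real (cubic c y))^3
     - 6 * ((\<lambda>p. complex_of_real (D1 c y p)) p * (\<lambda>p. complex_of_real (D1 c y p)) q * (\<lambda>p. complex_of_real (D1 c y p)) r * (\<lambda>p. complex_of_real (D1 c y p)) s)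
        / (complex_of_real (cubic c y))^4)"
  unfolding L4_def by (intro ext) (simp add: mult.assoc)

lemma C4_L4: assumes "cubic c y \<noteq> 0"
  shows "C4 (\<lambda>p q r s. complex_of_real (L4 c p q r s y)) A B C D =
   - (tri c A B C * lin c y D + tri c A B D * lin c y C + tri c A C D * lin c y B + tri c B C D * lin c y A) / (complex_of_real (cubic c y))^2
   - (bil c y A B * bil c y C D + bil c y A C * bil c y B D + bil c y A D * bil c y B C) / (complex_of_real (cubic c y))^2
   + 2 * (bil c y A B * lin c y C * lin c y D + bil c y A C * lin c y B * lin c y D + bil c y A D * lin c y B * lin c y C
        + bil c y B C * lin c y A * lin c y D + bil c y B D * lin c y A * lin c y C + bil c y C D * lin c y A * lin c y B) / (complex_of_real (cubic c y))^3
   - 6 * lin c y A * lin c y B * lin c y C * lin c y D / (complex_of_real (cubic c y))^4"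
  unfolding L4_fun[OF assms]
  apply (simp only: C4_add C4_diff C4_neg C4_div C4_mult sh_p_q_r_s)
  apply (simp only: sh_pq_r_s sh_pr_q_s sh_ps_q_r sh_qr_p_s sh_qs_p_r sh_rs_p_q sh_p_q_r_s)
  apply (simp only: sh_pqr_s sh_pqs_r sh_prs_q sh_qrs_p sh_pq_rs sh_pr_qs sh_ps_qr)
  apply (simp only: tri_def[symmetric] bil_def[symmetric] lin_def[symmetric])
  apply (simp add: algebra_simps)
  done


definition yc :: "real^3 \<Rightarrow> complex^3" where "yc y = (\<chi> i. complex_of_real (y$i))"

lemma E2c: "(\<Sum>k\<in>UNIV. complex_of_real (D2 c y i k) * yc y $ k) = 2 * complex_of_real (D1 c y i)"
proof -
  have "(\<Sum>k\<in>UNIV. complex_of_real (D2 c y i k) * yc y $ k) = complex_of_real (\<Sum>k\<in>UNIV. D2 c y i k * y$k)"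
    unfolding yc_def by simp
  then show ?thesis by (simp add: E2)
qed

lemma E3c: "lin c y (yc y) = 3 * complex_of_real (cubic c y)"
proof -
  have "lin c y (yc y) = complex_of_real (\<Sum>k\<in>UNIV. D1 c y k * y$k)"
    unfolding yc_def lin_def by simp
  then show ?thesis by (simp add: E3)
qed

lemma sum_comb3: fixes A B C :: "complex^3"
  shows "(\<Sum>k\<in>UNIV. (f k::complex) * (\<alpha> * A$k + \<beta> * B$k - \<gamma> * C$k) / a) =
   (\<alpha> * (\<Sum>k\<in>UNIV. f k * A$k) + \<beta> * (\<Sum>k\<in>UNIV. f k * B$k) - \<gamma> * (\<Sum>k\<in>UNIV. f k * C$k)) / a"
  by (cases "a = 0") (simp_all add: sum_3 field_simps)

definition omega :: "(3\<Rightarrow>3\<Rightarrow>3\<Rightarrow>real) \<Rightarrow> real^3 \<Rightarrow> complex^3 \<Rightarrow> complex^3 \<Rightarrow> complex^3" where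
  "omega c y A B = (\<chi> k. (lin c y B * A$k + lin c y A * B$k - bil c y A B * yc y $ k) / complex_of_real (cubic c y))"

definition DV :: "(3\<Rightarrow>3\<Rightarrow>3\<Rightarrow>real) \<Rightarrow> real^3 \<Rightarrow> complex^3 \<Rightarrow> 3 \<Rightarrow> complex" where
  "DV c y A e = (\<Sum>k\<in>UNIV. complex_of_real (D2 c y e k) * A$k)"

definition tau :: "(3\<Rightarrow>3\<Rightarrow>3\<Rightarrow>real) \<Rightarrow> complex^3 \<Rightarrow> complex^3 \<Rightarrow> 3 \<Rightarrow> complex" where
  "tau c A B e = (\<Sum>i\<in>UNIV. \<Sum>k\<in>UNIV. complex_of_real (T3 c e i k) * A$i * B$k)"

definition U :: "(3\<Rightarrow>3\<Rightarrow>3\<Rightarrow>real) \<Rightarrow> real^3 \<Rightarrow> complex^3 \<Rightarrow> complex^3 \<Rightarrow> 3 \<Rightarrow> complex" where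
  "U c y A B e = (\<Sum>i\<in>UNIV. \<Sum>k\<in>UNIV. complex_of_real (L3 c e i k y) * A$i * B$k)"

lemma U_expand: assumes "cubic c y \<noteq> 0"
  shows "U c y A B e = tau c A B e / complex_of_real (cubic c y)
    - (DV c y A e * lin c y B + DV c y B e * lin c y A + bil c y A B * complex_of_real (D1 c y e)) / (complex_of_real (cubic c y))^2
    + 2 * complex_of_real (D1 c y e) * lin c y A * lin c y B / (complex_of_real (cubic c y))^3"
proof -
  let ?a = "cubic c y"
  define N where "N = (\<lambda>i k. T3 c e i k * ?a^2 - (D2 c y e i * D1 c y k + D2 c y e k * D1 c y i + D2 c y i k * D1 c y e) * ?a
      + 2 * D1 c y e * D1 c y i * D1 c y k)"
  have L: "\<And>i k. L3 c e i k y = N i k / ?a^3"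
    unfolding N_def L3_def using assms by (simp add: field_simps power2_eq_square power3_eq_cube)
  have "U c y A B e = (\<Sum>i\<in>UNIV. \<Sum>k\<in>UNIV. complex_of_real (N i k) * A$i * B$k) / (complex_of_real ?a)^3"
    unfolding U_def L by (simp add: sum_divide_distrib)
  also have "(\<Sum>i\<in>UNIV. \<Sum>k\<in>UNIV. complex_of_real (N i k) * A$i * B$k) =
     tau c A B e * (complex_of_real ?a)^2 - (DV c y A e * lin c y B + DV c y B e * lin c y A + bil c y A B * complex_of_real (D1 c y e)) * complex_of_real ?a
     + 2 * complex_of_real (D1 c y e) * lin c y A * lin c y B"
    unfolding N_def tau_def DV_def lin_def bil_def by (simp add: sum_3 algebra_simps)
  finally show ?thesis using assms by (simp add: field_simps power2_eq_square power3_eq_cube)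
qed

lemma DV_omega: assumes "cubic c y \<noteq> 0"
  shows "DV c y (omega c y A B) e = (lin c y B * DV c y A e + lin c y A * DV c y B e - bil c y A B * 2 * complex_of_real (D1 c y e)) / complex_of_real (cubic c y)"
  unfolding DV_def omega_def by (simp only: vec_lambda_beta times_divide_eq_right sum_comb3 E2c) (simp add: algebra_simps)

lemma lin_omega: assumes "cubic c y \<noteq> 0"
  shows "lin c y (omega c y A B) = (2 * lin c y A * lin c y B - 3 * bil c y A B * complex_of_real (cubic c y)) / complex_of_real (cubic c y)"
proof -
  have "lin c y (omega c y A B) = (lin c y B * lin c y A + lin c y A * lin c y B - bil c y A B * lin c y (yc y)) / complex_of_real (cubic c y)"
    unfolding lin_def omega_def by (simp only: vec_lambda_beta times_divide_eq_right sum_comb3)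
  then show ?thesis by (simp add: E3c algebra_simps)
qed

lemma S2_contract:
  fixes g :: "3\<Rightarrow>3\<Rightarrow>complex" and F H :: "3\<Rightarrow>3\<Rightarrow>3\<Rightarrow>complex" and X Xb Y Yb :: "complex^3"
  shows "(\<Sum>i\<in>UNIV. \<Sum>j\<in>UNIV. \<Sum>k\<in>UNIV. \<Sum>l\<in>UNIV. (\<Sum>d\<in>UNIV. \<Sum>e\<in>UNIV. g e d * F e i k * H j d l) * X$i * Xb$j * Y$k * Yb$l)
   = (\<Sum>d\<in>UNIV. \<Sum>e\<in>UNIV. g e d * (\<Sum>i\<in>UNIV. \<Sum>k\<in>UNIV. F e i k * X$i * Y$k) * (\<Sum>j\<in>UNIV. \<Sum>l\<in>UNIV. H j d l * Xb$j * Yb$l))"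
proof -
  have pw: "\<And>i j k l. (\<Sum>d\<in>UNIV. \<Sum>e\<in>UNIV. g e d * F e i k * H j d l) * X$i * Xb$j * Y$k * Yb$l
     = (\<Sum>d\<in>UNIV. \<Sum>e\<in>UNIV. g e d * (F e i k * X$i * Y$k) * (H j d l * Xb$j * Yb$l))"
    unfolding sum_distrib_right by (simp add: mult_ac)
  have pw2: "\<And>d e. g e d * (\<Sum>i\<in>UNIV. \<Sum>k\<in>UNIV. F e i k * X$i * Y$k) * (\<Sum>j\<in>UNIV. \<Sum>l\<in>UNIV. H j d l * Xb$j * Yb$l)
     = (\<Sum>i\<in>UNIV. \<Sum>k\<in>UNIV. \<Sum>j\<in>UNIV. \<Sum>l\<in>UNIV. g e d * (F e i k * X$i * Y$k) * (H j d l * Xb$j * Yb$l))"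
    by (simp add: sum_3 algebra_simps)
  have C: "(\<Sum>i\<in>UNIV. \<Sum>j\<in>UNIV. \<Sum>k\<in>UNIV. \<Sum>l\<in>UNIV. \<Sum>d\<in>UNIV. \<Sum>e\<in>UNIV. g e d * (F e i k * X$i * Y$k) * (H j d l * Xb$j * Yb$l))
     = (\<Sum>d\<in>UNIV. \<Sum>e\<in>UNIV. \<Sum>i\<in>UNIV. \<Sum>k\<in>UNIV. \<Sum>j\<in>UNIV. \<Sum>l\<in>UNIV. g e d * (F e i k * X$i * Y$k) * (H j d l * Xb$j * Yb$l))"
    by (simp only: sum_3 algebra_simps)
  show ?thesis unfolding pw pw2 C ..
qed

definition cv :: "complex^3 \<Rightarrow> complex^3" where "cv X = (\<chi> i. cnj (X$i))"

lemma reorder4: fixes F :: "3\<Rightarrow>3\<Rightarrow>3\<Rightarrow>3\<Rightarrow>complex" and X Xb Y Yb :: "complex^3"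
  shows "(\<Sum>i\<in>UNIV. \<Sum>j\<in>UNIV. \<Sum>k\<in>UNIV. \<Sum>l\<in>UNIV. F j i l k * X$i * Xb$j * Y$k * Yb$l) = C4 F Xb X Yb Y"
  unfolding C4_def by (simp add: sum_3 algebra_simps)

lemma split4: fixes A B w :: "3\<Rightarrow>3\<Rightarrow>3\<Rightarrow>3\<Rightarrow>complex"
  shows "(\<Sum>i\<in>UNIV. \<Sum>j\<in>UNIV. \<Sum>k\<in>UNIV. \<Sum>l\<in>UNIV. (- A i j k l / 16 - B i j k l / 64) * w i j k l)
   = - (\<Sum>i\<in>UNIV. \<Sum>j\<in>UNIV. \<Sum>k\<in>UNIV. \<Sum>l\<in>UNIV. A i j k l * w i j k l) / 16
     - (\<Sum>i\<in>UNIV. \<Sum>j\<in>UNIV. \<Sum>k\<in>UNIV. \<Sum>l\<in>UNIV. B i j k l * w i j k l) / 64"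
  by (simp add: sum_3 algebra_simps)

lemma L3_sym12: "L3 c j i k y = L3 c i j k y"
  unfolding L3_def by (simp add: T3_sym1 D2_sym algebra_simps)

definition Gm :: "(3\<Rightarrow>3\<Rightarrow>3\<Rightarrow>real) \<Rightarrow> complex^3 \<Rightarrow> complex^3^3" where
  "Gm c t = (\<chi> i j. amwp_g (cubic c) i j t)"

lemma Rform_eq: assumes "cubic c (Imv t) > 0"
  shows "Rform (cubic c) t X Y = - C4 (\<lambda>p q r s. complex_of_real (L4 c p q r s (Imv t))) (cv X) X (cv Y) Y / 16
    - (\<Sum>d\<in>UNIV. \<Sum>e\<in>UNIV. matrix_inv (Gm c t) $ e $ d * U c (Imv t) X Y e * U c (Imv t) (cv X) (cv Y) d) / 64"
proof -
  have "Rform (cubic c) t X Y = (\<Sum>i\<in>UNIV. \<Sum>j\<in>UNIV. \<Sum>k\<in>UNIV. \<Sum>l\<in>UNIV.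
      (- complex_of_real (L4 c j i l k (Imv t)) / 16
       - (\<Sum>d\<in>UNIV. \<Sum>e\<in>UNIV. matrix_inv (Gm c t) $ e $ d * complex_of_real (L3 c e i k (Imv t)) * complex_of_real (L3 c j d l (Imv t))) / 64)
      * (X$i * cv X $ j * Y$k * cv Y $ l))"
    unfolding Rform_def R_eq[OF assms] cv_def amwp_ginv_def Gm_def by (simp add: mult.assoc)
  also have "\<dots> = - (\<Sum>i\<in>UNIV. \<Sum>j\<in>UNIV. \<Sum>k\<in>UNIV. \<Sum>l\<in>UNIV. complex_of_real (L4 c j i l k (Imv t)) * (X$i * cv X $ j * Y$k * cv Y $ l)) / 16
     - (\<Sum>i\<in>UNIV. \<Sum>j\<in>UNIV. \<Sum>k\<in>UNIV. \<Sum>l\<in>UNIV. (\<Sum>d\<in>UNIV. \<Sum>e\<in>UNIV. matrix_inv (Gm c t) $ e $ d * complex_of_real (L3 c e i k (Imv t)) * complex_of_real (L3 c j d l (Imv t))) * (X$i * cv X $ j * Y$k * cv Y $ l)) / 64"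
    by (rule split4)
  also have "(\<Sum>i\<in>UNIV. \<Sum>j\<in>UNIV. \<Sum>k\<in>UNIV. \<Sum>l\<in>UNIV. complex_of_real (L4 c j i l k (Imv t)) * (X$i * cv X $ j * Y$k * cv Y $ l))
     = C4 (\<lambda>p q r s. complex_of_real (L4 c p q r s (Imv t))) (cv X) X (cv Y) Y"
    using reorder4[of "\<lambda>p q r s. complex_of_real (L4 c p q r s (Imv t))" X "cv X" Y "cv Y"] by (simp add: mult.assoc)
  also have "(\<Sum>i\<in>UNIV. \<Sum>j\<in>UNIV. \<Sum>k\<in>UNIV. \<Sum>l\<in>UNIV. (\<Sum>d\<in>UNIV. \<Sum>e\<in>UNIV. matrix_inv (Gm c t) $ e $ d * complex_of_real (L3 c e i k (Imv t)) * complex_of_real (L3 c j d l (Imv t))) * (X$i * cv X $ j * Y$k * cv Y $ l))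
     = (\<Sum>d\<in>UNIV. \<Sum>e\<in>UNIV. matrix_inv (Gm c t) $ e $ d * U c (Imv t) X Y e * U c (Imv t) (cv X) (cv Y) d)"
    using S2_contract[of "\<lambda>e d. matrix_inv (Gm c t) $ e $ d" "\<lambda>e i k. complex_of_real (L3 c e i k (Imv t))"
       "\<lambda>j d l. complex_of_real (L3 c j d l (Imv t))" X "cv X" Y "cv Y"]
    unfolding U_def by (simp add: mult.assoc L3_sym12[of c _ "_::3"])
  finally show ?thesis .
qed

lemma Gm_eq: assumes "cubic c (Imv t) > 0"
  shows "Gm c t $ i $ j = complex_of_real (- (1/4) * L2 c j i (Imv t))"
  unfolding Gm_def using g_eq[OF assms] by simp

lemma L2_sym: "L2 c j i y = L2 c i j y"
  unfolding L2_def by (simp add: D2_sym mult.commute)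

lemma Gm_transpose: assumes "cubic c (Imv t) > 0"
  shows "transpose (Gm c t) = Gm c t"
  unfolding transpose_def using Gm_eq[OF assms] L2_sym by (simp add: vec_eq_iff)

lemma Gmv: assumes "cubic c (Imv t) > 0"
  shows "(Gm c t *v z) $ e = (- DV c (Imv t) z e / complex_of_real (cubic c (Imv t))
      + complex_of_real (D1 c (Imv t) e) * lin c (Imv t) z / (complex_of_real (cubic c (Imv t)))^2) / 4"
  using assms unfolding matrix_vector_mult_def DV_def lin_def
  by (simp add: Gm_eq[OF assms] L2_def sum_3 D2_sym field_simps power2_eq_square)

lemma U_eq: assumes "cubic c (Imv t) > 0"
  shows "U c (Imv t) A B e = tau c A B e / complex_of_real (cubic c (Imv t)) + 4 * (Gm c t *v omega c (Imv t) A B) $ e"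
proof -
  have a: "cubic c (Imv t) \<noteq> 0" using assms by simp
  show ?thesis
    unfolding U_expand[OF a] Gmv[OF assms] DV_omega[OF a] lin_omega[OF a]
    using a by (simp add: field_simps power2_eq_square power3_eq_cube; algebra)
qed

lemma LA_h1: fixes G Gi :: "complex^3^3"
  shows "(\<Sum>d\<in>UNIV. \<Sum>e\<in>UNIV. Gi$e$d * \<alpha> e * (G *v \<delta>)$d) = (\<Sum>e\<in>UNIV. \<alpha> e * ((Gi ** G) *v \<delta>)$e)"
  unfolding matrix_vector_mult_def matrix_matrix_mult_def by (simp add: sum_3 algebra_simps)
lemma LA_h2: fixes G Gi :: "complex^3^3"
  shows "(\<Sum>d\<in>UNIV. \<Sum>e\<in>UNIV. Gi$e$d * (G *v \<beta>)$e * \<gamma> d) = (\<Sum>d\<in>UNIV. \<gamma> d * (\<beta> v* (transpose G ** Gi))$d)"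
  unfolding matrix_vector_mult_def matrix_matrix_mult_def vector_matrix_mult_def transpose_def by (simp add: sum_3 algebra_simps)
lemma LA_h3: fixes G Gi :: "complex^3^3"
  shows "(\<Sum>d\<in>UNIV. \<Sum>e\<in>UNIV. Gi$e$d * (G *v \<beta>)$e * (G *v \<delta>)$d) = (\<Sum>d\<in>UNIV. (G *v \<delta>)$d * (\<beta> v* (transpose G ** Gi))$d)"
  unfolding matrix_vector_mult_def matrix_matrix_mult_def vector_matrix_mult_def transpose_def by (simp add: sum_3 algebra_simps)
lemma LA_h0: fixes G Gi :: "complex^3^3"
  shows "(\<Sum>d\<in>UNIV. \<Sum>e\<in>UNIV. Gi$e$d * (\<alpha> e + 4 * (G *v \<beta>)$e) * (\<gamma> d + 4 * (G *v \<delta>)$d))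
   = (\<Sum>d\<in>UNIV. \<Sum>e\<in>UNIV. Gi$e$d * \<alpha> e * \<gamma> d) + 4 * (\<Sum>d\<in>UNIV. \<Sum>e\<in>UNIV. Gi$e$d * \<alpha> e * (G *v \<delta>)$d)
     + 4 * (\<Sum>d\<in>UNIV. \<Sum>e\<in>UNIV. Gi$e$d * (G *v \<beta>)$e * \<gamma> d) + 16 * (\<Sum>d\<in>UNIV. \<Sum>e\<in>UNIV. Gi$e$d * (G *v \<beta>)$e * (G *v \<delta>)$d)"
  by (simp add: sum_3 algebra_simps)

lemma LA: fixes G Gi :: "complex^3^3"
  assumes "Gi ** G = mat 1" "G ** Gi = mat 1" "transpose G = G"
  shows "(\<Sum>d\<in>UNIV. \<Sum>e\<in>UNIV. Gi$e$d * (\<alpha> e + 4 * (G *v \<beta>)$e) * (\<gamma> d + 4 * (G *v \<delta>)$d))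
   = (\<Sum>d\<in>UNIV. \<Sum>e\<in>UNIV. Gi$e$d * \<alpha> e * \<gamma> d) + 4 * (\<Sum>e\<in>UNIV. \<alpha> e * \<delta>$e)
     + 4 * (\<Sum>d\<in>UNIV. \<gamma> d * \<beta>$d) + 16 * (\<Sum>e\<in>UNIV. (G *v \<beta>)$e * \<delta>$e)"
  unfolding LA_h0 LA_h1 LA_h2 LA_h3 assms by simp

lemma tau_dot: "(\<Sum>e\<in>UNIV. tau c A B e * (Z::complex^3)$e) = tri c Z A B"
  unfolding tau_def tri_def by (simp add: sum_3 algebra_simps)
lemma tri_sym1: "tri c B A C = tri c A B C"
  unfolding tri_def by (simp add: sum_3 T3_sym1 T3_sym2 algebra_simps)
lemma tri_sym2: "tri c A C B = tri c A B C"
  unfolding tri_def by (simp add: sum_3 T3_sym1 T3_sym2 algebra_simps)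
lemma tri_yc: "tri c (yc y) A B = bil c y A B"
  unfolding tri_def bil_def yc_def D2_def by (simp add: sum_3 T3_sym1 T3_sym2 algebra_simps)
lemma bil_sym: "bil c y B A = bil c y A B"
  unfolding bil_def by (simp add: sum_3 D2_sym algebra_simps)
lemma dot_DV: "(\<Sum>e\<in>UNIV. (Z::complex^3)$e * DV c y W e) = bil c y Z W"
  unfolding bil_def DV_def by (simp add: sum_3 algebra_simps)
lemma dot_D1: "(\<Sum>e\<in>UNIV. complex_of_real (D1 c y e) * (Z::complex^3)$e) = lin c y Z"
  unfolding lin_def by simp

lemma sum_comb3f: fixes p q r :: "3 \<Rightarrow> complex"
  shows "(\<Sum>k\<in>UNIV. f k * (\<alpha> * p k + \<beta> * q k - \<gamma> * r k) / a) =
   (\<alpha> * (\<Sum>k\<in>UNIV. f k * p k) + \<beta> * (\<Sum>k\<in>UNIV. f k * q k) - \<gamma> * (\<Sum>k\<in>UNIV. f k * r k)) / a"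
  by (cases "a = 0") (simp_all add: sum_3 field_simps)

lemma omega_nth: "omega c y A B $ k = (lin c y B * A$k + lin c y A * B$k - bil c y A B * yc y $ k) / complex_of_real (cubic c y)"
  unfolding omega_def by simp

lemma E1: "(\<Sum>e\<in>UNIV. tau c X Y e * omega c y Xb Yb $ e) =
   (lin c y Yb * tri c Xb X Y + lin c y Xb * tri c Yb X Y - bil c y Xb Yb * bil c y X Y) / complex_of_real (cubic c y)"
proof -
  have "(\<Sum>e\<in>UNIV. tau c X Y e * omega c y Xb Yb $ e) = (\<Sum>e\<in>UNIV. tau c X Y e * (lin c y Yb * Xb$e + lin c y Xb * Yb$e - bil c y Xb Yb * yc y $ e) / complex_of_real (cubic c y))"
    by (simp only: omega_nth times_divide_eq_right)
  also have "\<dots> = (lin c y Yb * (\<Sum>e\<in>UNIV. tau c X Y e * Xb$e) + lin c y Xb * (\<Sum>e\<in>UNIV. tau c X Y e * Yb$e) - bil c y Xb Yb * (\<Sum>e\<in>UNIV. tau c X Y e * yc y $ e)) / complex_of_real (cubic c y)"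
    by (rule sum_comb3f)
  finally show ?thesis by (simp only: tau_dot tri_yc)
qed

lemma core:
  fixes a lX lXb lY lYb bXXb bXY bXYb bXbY bXbYb bYYb t1 t2 t3 t4 :: complex
  assumes "a \<noteq> 0"
  defines "linw \<equiv> (2 * lX * lY - 3 * bXY * a) / a"
      and "linwb \<equiv> (2 * lXb * lYb - 3 * bXbYb * a) / a"
      and "bwbX \<equiv> (lYb * bXXb + lXb * bXYb - 2 * bXbYb * lX) / a"
      and "bwbY \<equiv> (lYb * bXbY + lXb * bYYb - 2 * bXbYb * lY) / a"
  shows "(- (t1 * lY + t2 * lYb + t3 * lX + t4 * lXb) / a^2
     - (bXXb * bYYb + bXbYb * bXY + bXbY * bXYb) / a^2
     + 2 * (bXXb * lYb * lY + bXbYb * lX * lY + bXbY * lX * lYb + bXYb * lXb * lY + bXY * lXb * lYb + bYYb * lXb * lX) / a^3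
     - 6 * lXb * lX * lYb * lY / a^4)
   + ((lYb * t2 + lXb * t4 - bXbYb * bXY) / a) / a + ((lY * t1 + lX * t3 - bXY * bXbYb) / a) / a
   + 4 * ((- ((lY * bwbX + lX * bwbY - 2 * bXY * linwb) / a) / a + linw * linwb / a^2) / 4)
   = - ((- bXXb / a + lX * lXb / a^2) * (- bYYb / a + lY * lYb / a^2))
     - ((- bXYb / a + lX * lYb / a^2) * (- bXbY / a + lXb * lY / a^2))"
  using assms(1) unfolding linw_def linwb_def bwbX_def bwbY_def
  by (simp add: field_simps power2_eq_square power3_eq_cube power4_eq_xxxx; algebra)

lemma dot_D1': "(\<Sum>e\<in>UNIV. (Z::complex^3)$e * complex_of_real (D1 c y e)) = lin c y Z"
  unfolding lin_def by (simp add: mult.commute)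

lemma E3a: assumes "cubic c y \<noteq> 0"
  shows "(\<Sum>e\<in>UNIV. (Z::complex^3)$e * DV c y (omega c y A B) e) =
    (lin c y B * bil c y Z A + lin c y A * bil c y Z B - bil c y A B * 2 * lin c y Z) / complex_of_real (cubic c y)"
proof -
  have "(\<Sum>e\<in>UNIV. Z$e * DV c y (omega c y A B) e) = (\<Sum>e\<in>UNIV. Z$e * (lin c y B * DV c y A e + lin c y A * DV c y B e - bil c y A B * 2 * complex_of_real (D1 c y e)) / complex_of_real (cubic c y))"
    by (simp only: DV_omega[OF assms] times_divide_eq_right)
  also have "\<dots> = (lin c y B * (\<Sum>e\<in>UNIV. Z$e * DV c y A e) + lin c y A * (\<Sum>e\<in>UNIV. Z$e * DV c y B e) - bil c y A B * 2 * (\<Sum>e\<in>UNIV. Z$e * complex_of_real (D1 c y e))) / complex_of_real (cubic c y)"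
    by (rule sum_comb3f)
  finally show ?thesis by (simp only: dot_DV dot_D1')
qed

lemma sum_comb2: fixes p q z :: "3 \<Rightarrow> complex"
  shows "(\<Sum>e\<in>UNIV. ((- p e / a + q e * L / a^2) / 4) * z e) = (- (\<Sum>e\<in>UNIV. p e * z e) / a + L * (\<Sum>e\<in>UNIV. q e * z e) / a^2) / 4"
  by (cases "a = 0") (simp_all add: sum_3 field_simps)

lemma sum_div2: fixes g :: "3\<Rightarrow>3\<Rightarrow>complex" and x z :: "3 \<Rightarrow> complex"
  shows "(\<Sum>d\<in>UNIV. \<Sum>e\<in>UNIV. g e d * (x e / a) * (z d / a)) = (\<Sum>d\<in>UNIV. \<Sum>e\<in>UNIV. g e d * x e * z d) / a^2"
  by (cases "a = 0") (simp_all add: sum_3 field_simps power2_eq_square)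

lemma sum_div1: fixes x :: "3 \<Rightarrow> complex" and w :: "complex^3"
  shows "(\<Sum>e\<in>UNIV. (x e / a) * w$e) = (\<Sum>e\<in>UNIV. x e * w$e) / a"
  by (simp add: sum_divide_distrib)

lemma gform_eq: assumes "cubic c (Imv t) > 0"
  shows "gform (cubic c) t X Y = (- bil c (Imv t) X (cv Y) / complex_of_real (cubic c (Imv t))
     + lin c (Imv t) X * lin c (Imv t) (cv Y) / (complex_of_real (cubic c (Imv t)))^2) / 4"
  using assms unfolding gform_def bil_def lin_def cv_def
  by (simp add: g_eq[OF assms] L2_def sum_3 D2_sym field_simps power2_eq_square)

lemma Rform_final:
  assumes pos: "cubic c (Imv t) > 0"
    and inv1: "matrix_inv (Gm c t) ** Gm c t = mat 1" and inv2: "Gm c t ** matrix_inv (Gm c t) = mat 1"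
  shows "Rform (cubic c) t X Y = - (\<Sum>d\<in>UNIV. \<Sum>e\<in>UNIV. matrix_inv (Gm c t) $ e $ d * tau c X Y e * tau c (cv X) (cv Y) d)
            / (64 * (complex_of_real (cubic c (Imv t)))^2)
      + gform (cubic c) t X X * gform (cubic c) t Y Y + gform (cubic c) t X Y * gform (cubic c) t Y X"
proof -
  define y where "y = Imv t"
  define a where "a = complex_of_real (cubic c y)"
  define Gi where "Gi = matrix_inv (Gm c t)"
  define Xb where "Xb = cv X"
  define Yb where "Yb = cv Y"
  have a0: "cubic c y \<noteq> 0" using pos y_def by simp
  have an: "a \<noteq> 0" using a0 a_def by simp
  have py: "cubic c y > 0" using pos y_def by simp
  have XX: "cv Xb = X" "cv Yb = Y" unfolding Xb_def Yb_def cv_def by (simp_all add: vec_eq_iff)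
  define SG where "SG = (\<Sum>d\<in>UNIV. \<Sum>e\<in>UNIV. Gi $ e $ d * tau c X Y e * tau c Xb Yb d)"
  have S2: "(\<Sum>d\<in>UNIV. \<Sum>e\<in>UNIV. Gi $ e $ d * U c y X Y e * U c y Xb Yb d)
     = SG / a^2 + 4 * ((\<Sum>e\<in>UNIV. tau c X Y e * omega c y Xb Yb $ e) / a)
       + 4 * ((\<Sum>e\<in>UNIV. tau c Xb Yb e * omega c y X Y $ e) / a)
       + 16 * (\<Sum>e\<in>UNIV. (Gm c t *v omega c y X Y) $ e * omega c y Xb Yb $ e)"
  proof -
    have "(\<Sum>d\<in>UNIV. \<Sum>e\<in>UNIV. Gi $ e $ d * U c y X Y e * U c y Xb Yb d)
      = (\<Sum>d\<in>UNIV. \<Sum>e\<in>UNIV. Gi $ e $ d * ((\<lambda>e. tau c X Y e / a) e + 4 * (Gm c t *v omega c y X Y) $ e)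
                  * ((\<lambda>e. tau c Xb Yb e / a) d + 4 * (Gm c t *v omega c y Xb Yb) $ d))"
      unfolding y_def a_def U_eq[OF pos] by simp
    also have "\<dots> = (\<Sum>d\<in>UNIV. \<Sum>e\<in>UNIV. Gi $ e $ d * (tau c X Y e / a) * (tau c Xb Yb d / a))
       + 4 * (\<Sum>e\<in>UNIV. (tau c X Y e / a) * omega c y Xb Yb $ e)
       + 4 * (\<Sum>d\<in>UNIV. (tau c Xb Yb d / a) * omega c y X Y $ d)
       + 16 * (\<Sum>e\<in>UNIV. (Gm c t *v omega c y X Y) $ e * omega c y Xb Yb $ e)"
      unfolding Gi_def by (rule LA[OF inv1 inv2 Gm_transpose[OF pos]])
    finally show ?thesis unfolding sum_div2 sum_div1 SG_def by simp
  qed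
  have E3: "(\<Sum>e\<in>UNIV. (Gm c t *v omega c y X Y) $ e * omega c y Xb Yb $ e)
     = (- bil c y (omega c y Xb Yb) (omega c y X Y) / a + lin c y (omega c y X Y) * lin c y (omega c y Xb Yb) / a^2) / 4"
  proof -
    have "(\<Sum>e\<in>UNIV. (Gm c t *v omega c y X Y) $ e * omega c y Xb Yb $ e)
      = (\<Sum>e\<in>UNIV. ((- DV c y (omega c y X Y) e / a + complex_of_real (D1 c y e) * lin c y (omega c y X Y) / a^2) / 4) * omega c y Xb Yb $ e)"
      unfolding Gmv[OF pos] y_def a_def ..
    also have "\<dots> = (- (\<Sum>e\<in>UNIV. DV c y (omega c y X Y) e * omega c y Xb Yb $ e) / a
        + lin c y (omega c y X Y) * (\<Sum>e\<in>UNIV. complex_of_real (D1 c y e) * omega c y Xb Yb $ e) / a^2) / 4"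
      by (rule sum_comb2)
    finally show ?thesis by (simp only: dot_D1 dot_DV mult.commute[of "DV c y _ _"])
  qed
  have B1: "bil c y (omega c y Xb Yb) (omega c y X Y)
     = (lin c y Y * bil c y (omega c y Xb Yb) X + lin c y X * bil c y (omega c y Xb Yb) Y - bil c y X Y * 2 * lin c y (omega c y Xb Yb)) / a"
    using E3a[OF a0, of "omega c y Xb Yb" X Y] unfolding dot_DV a_def .
  have B2: "bil c y (omega c y Xb Yb) Z = (lin c y Yb * bil c y Z Xb + lin c y Xb * bil c y Z Yb - bil c y Xb Yb * 2 * lin c y Z) / a" for Z
    using E3a[OF a0, of Z Xb Yb] unfolding dot_DV a_def bil_sym[of c y "omega c y Xb Yb" Z] .
  have R: "Rform (cubic c) t X Y = - C4 (\<lambda>p q r s. complex_of_real (L4 c p q r s y)) Xb X Yb Y / 16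
    - (\<Sum>d\<in>UNIV. \<Sum>e\<in>UNIV. Gi $ e $ d * U c y X Y e * U c y Xb Yb d) / 64"
    unfolding Rform_eq[OF pos] y_def Gi_def Xb_def Yb_def ..
  have gf: "gform (cubic c) t A B = (- bil c y A (cv B) / a + lin c y A * lin c y (cv B) / a^2) / 4" for A B
    unfolding gform_eq[OF pos] y_def a_def ..
  show ?thesis
    unfolding R S2 E3
    unfolding B1
    unfolding B2 C4_L4[OF a0] E1 lin_omega[OF a0] gf Xb_def[symmetric] Yb_def[symmetric] XX
      y_def[symmetric] a_def[symmetric] Gi_def[symmetric] SG_def[symmetric]
    using an by (simp add: tri_sym1 tri_sym2 bil_sym field_simps power2_eq_square power3_eq_cube power4_eq_xxxx; algebra)
qed

definition qKf :: "real \<Rightarrow> real \<Rightarrow> real \<Rightarrow> real \<Rightarrow> real \<Rightarrow> real \<Rightarrow> real \<Rightarrow> real \<Rightarrow> real \<Rightarrow> real \<Rightarrow> real \<Rightarrow> real \<Rightarrow> real \<Rightarrow> real \<Rightarrow> real \<Rightarrow> real" where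
  "qKf h11 h12 h13 h22 h23 h33 y1 y2 y3 u1 u2 u3 w1 w2 w3 =
    ((h11*y1 + h12*y2 + h13*y3)*y1 + (h12*y1 + h22*y2 + h23*y3)*y2 + (h13*y1 + h23*y2 + h33*y3)*y3)
     * (h11*u1*w1 + h22*u2*w2 + h33*u3*w3 + h12*(u1*w2+u2*w1) + h13*(u1*w3+u3*w1) + h23*(u2*w3+u3*w2))
    - ((h11*y1 + h12*y2 + h13*y3)*u1 + (h12*y1 + h22*y2 + h23*y3)*u2 + (h13*y1 + h23*y2 + h33*y3)*u3)
     * ((h11*y1 + h12*y2 + h13*y3)*w1 + (h12*y1 + h22*y2 + h23*y3)*w2 + (h13*y1 + h23*y2 + h33*y3)*w3)"

lemma Kid:
  "qKf h11 h12 h13 h22 h23 h33 y1 y2 y3 u1 u2 u3 u1 u2 u3 * qKf h11 h12 h13 h22 h23 h33 y1 y2 y3 w1 w2 w3 w1 w2 w3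
   - (qKf h11 h12 h13 h22 h23 h33 y1 y2 y3 u1 u2 u3 w1 w2 w3)^2
   = ((h11*y1 + h12*y2 + h13*y3)*y1 + (h12*y1 + h22*y2 + h23*y3)*y2 + (h13*y1 + h23*y2 + h33*y3)*y3)
     * (h11*h22*h33 + 2*h12*h23*h13 - h11*h23*h23 - h12*h12*h33 - h13*h22*h13)
     * (u1*(w2*y3 - w3*y2) - u2*(w1*y3 - w3*y1) + u3*(w1*y2 - w2*y1))^2"
  unfolding qKf_def by algebra

lemma Did:
  fixes h11 h12 h13 h22 h23 h33 y1 y2 y3 aa :: real
  defines "d1 \<equiv> h11*y1 + h12*y2 + h13*y3"
      and "d2 \<equiv> h12*y1 + h22*y2 + h23*y3"
      and "d3 \<equiv> h13*y1 + h23*y2 + h33*y3"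
  defines "s \<equiv> d1*y1 + d2*y2 + d3*y3"
  defines "m11 \<equiv> - 4*aa*h11 + d1*d1" and "m12 \<equiv> - 4*aa*h12 + d1*d2" and "m13 \<equiv> - 4*aa*h13 + d1*d3"
      and "m21 \<equiv> - 4*aa*h12 + d2*d1" and "m22 \<equiv> - 4*aa*h22 + d2*d2" and "m23 \<equiv> - 4*aa*h23 + d2*d3"
      and "m31 \<equiv> - 4*aa*h13 + d3*d1" and "m32 \<equiv> - 4*aa*h23 + d3*d2" and "m33 \<equiv> - 4*aa*h33 + d3*d3"
  defines "dh \<equiv> h11*h22*h33 + 2*h12*h23*h13 - h11*h23*h23 - h12*h12*h33 - h13*h22*h13"
  shows "m11 * m22 * m33 + m12 * m23 * m31 + m13 * m21 * m32 - m11 * m23 * m32 - m12 * m21 * m33 - m13 * m22 * m31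
     = - 64 * (aa*aa*aa) * dh + 16 * (aa*aa) * dh * s"
  unfolding m11_def m12_def m13_def m21_def m22_def m23_def m31_def m32_def m33_def dh_def s_def d1_def d2_def d3_def
  by algebra

lemma det_shift: fixes H :: "real^3^3"
  shows "det (x *\<^sub>R mat 1 - H) = (x - H$1$1) * (x - H$2$2) * (x - H$3$3) - H$1$2 * H$2$3 * H$3$1 - H$1$3 * H$2$1 * H$3$2
     - (x - H$1$1) * H$2$3 * H$3$2 - H$1$2 * H$2$1 * (x - H$3$3) - H$1$3 * (x - H$2$2) * H$3$1"
  unfolding det_3 by (simp add: mat_def algebra_simps)

lemma eigvec: fixes H :: "real^3^3"
  assumes "det (l *\<^sub>R mat 1 - H) = 0"
  shows "\<exists>z. z \<noteq> 0 \<and> (\<forall>i. (\<Sum>j\<in>UNIV. H$i$j * z$j) = l * z$i)"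
proof -
  have "\<not> invertible (l *\<^sub>R mat 1 - H)" using assms invertible_det_nz by blast
  then have "\<not> (\<forall>x. (l *\<^sub>R mat 1 - H) *v x = 0 \<longrightarrow> x = 0)"
    using invertible_left_inverse matrix_left_invertible_ker by blast
  then obtain z where z: "(l *\<^sub>R mat 1 - H) *v z = 0" "z \<noteq> 0" by blast
  have "\<forall>i. (\<Sum>j\<in>UNIV. H$i$j * z$j) = l * z$i"
  proof
    fix i
    have "((l *\<^sub>R mat 1 - H) *v z) $ i = 0" using z by simp
    then show "(\<Sum>j\<in>UNIV. H$i$j * z$j) = l * z$i"
      using exhaust_3[of i] unfolding matrix_vector_mult_def by (auto simp add: mat_def sum_3 algebra_simps)
  qed
  then show ?thesis using z by blast
qed


lemma det3_div: fixes k :: real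
  shows "(x11/k)*(x22/k)*(x33/k) + (x12/k)*(x23/k)*(x31/k) + (x13/k)*(x21/k)*(x32/k) - (x11/k)*(x23/k)*(x32/k) - (x12/k)*(x21/k)*(x33/k) - (x13/k)*(x22/k)*(x31/k)
   = (x11*x22*x33 + x12*x23*x31 + x13*x21*x32 - x11*x23*x32 - x12*x21*x33 - x13*x22*x31) / k^3"
  by (cases "k = 0") (simp_all add: field_simps power3_eq_cube)

lemma cone_facts:
  assumes cone: "y0 \<in> index_cone (cubic c)"
  shows "\<forall>u::real^3. (\<Sum>i\<in>UNIV. \<Sum>j\<in>UNIV. (- L2 c i j y0) * u$i * u$j) \<ge> 0"
    and "(- L2 c 1 1 y0) * (- L2 c 2 2 y0) * (- L2 c 3 3 y0) + (- L2 c 1 2 y0) * (- L2 c 2 3 y0) * (- L2 c 3 1 y0)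
       + (- L2 c 1 3 y0) * (- L2 c 2 1 y0) * (- L2 c 3 2 y0) - (- L2 c 1 1 y0) * (- L2 c 2 3 y0) * (- L2 c 3 2 y0)
       - (- L2 c 1 2 y0) * (- L2 c 2 1 y0) * (- L2 c 3 3 y0) - (- L2 c 1 3 y0) * (- L2 c 2 2 y0) * (- L2 c 3 1 y0) \<noteq> 0"
proof -
  have apos: "cubic c y0 > 0" and sig: "signature_1_2 (hessian (cubic c) y0)"
    using cone unfolding index_cone_def by auto
  define H where "H = hessian (cubic c) y0"
  have Hij: "\<And>i j. H$i$j = D2 c y0 i j" unfolding H_def by (rule hess_cubic)
  obtain l1 l2 l3 where l: "l1 > 0" "l2 < 0" "l3 < 0" "\<And>x. det (x *\<^sub>R mat 1 - H) = (x - l1) * (x - l2) * (x - l3)"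
    using sig unfolding signature_1_2_def H_def by blast
  define h11 where "h11 = D2 c y0 1 1"
  define h12 where "h12 = D2 c y0 1 2"
  define h13 where "h13 = D2 c y0 1 3"
  define h22 where "h22 = D2 c y0 2 2"
  define h23 where "h23 = D2 c y0 2 3"
  define h33 where "h33 = D2 c y0 3 3"
  define y1 where "y1 = y0$1"
  define y2 where "y2 = y0$2"
  define y3 where "y3 = y0$3"
  define a where "a = cubic c y0"
  have Hs: "D2 c y0 1 1 = h11" "D2 c y0 1 2 = h12" "D2 c y0 1 3 = h13" "D2 c y0 2 1 = h12" "D2 c y0 2 2 = h22"
     "D2 c y0 2 3 = h23" "D2 c y0 3 1 = h13" "D2 c y0 3 2 = h23" "D2 c y0 3 3 = h33"
    unfolding h11_def h12_def h13_def h22_def h23_def h33_def by (simp_all add: D2_sym)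
  have ys: "y0$1 = y1" "y0$2 = y2" "y0$3 = y3" unfolding y1_def y2_def y3_def by simp_all
  define b1 where "b1 = h11*y1 + h12*y2 + h13*y3"
  define b2 where "b2 = h12*y1 + h22*y2 + h23*y3"
  define b3 where "b3 = h13*y1 + h23*y2 + h33*y3"
  have D1s: "D1 c y0 1 = b1 / 2" "D1 c y0 2 = b2 / 2" "D1 c y0 3 = b3 / 2"
    using E2[of c y0 1] E2[of c y0 2] E2[of c y0 3] unfolding b1_def b2_def b3_def
    by (simp_all add: sum_3 Hs ys)
  define s where "s = b1*y1 + b2*y2 + b3*y3"
  have s6: "s = 6 * a"
    using E3[of c y0] unfolding s_def a_def by (simp add: sum_3 D1s ys)
  have spos: "s > 0" using s6 apos a_def by simp
  define dh where "dh = h11*h22*h33 + 2*h12*h23*h13 - h11*h23*h23 - h12*h12*h33 - h13*h22*h13"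
  have "det (0 *\<^sub>R mat 1 - H) = (0 - l1) * (0 - l2) * (0 - l3)" by (rule l(4))
  then have "- dh = - (l1 * l2 * l3)"
    unfolding det_shift dh_def Hij by (simp add: Hs algebra_simps)
  then have dhe: "dh = l1 * (l2 * l3)" by (simp add: mult.assoc)
  have "l2 * l3 > 0" using l(2,3) by (rule mult_neg_neg)
  then have dhpos: "dh > 0" unfolding dhe using l(1) by simp
  have "det (l2 *\<^sub>R mat 1 - H) = 0" using l(4)[of l2] by simp
  then obtain z where z: "z \<noteq> 0" "\<And>i. (\<Sum>j\<in>UNIV. H$i$j * z$j) = l2 * z$i"
    using eigvec by blast
  define qz where "qz = h11*z$1*z$1 + h22*z$2*z$2 + h33*z$3*z$3 + 2*h12*z$1*z$2 + 2*h13*z$1*z$3 + 2*h23*z$2*z$3"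
  have "qz = z$1 * (\<Sum>j\<in>UNIV. H$1$j * z$j) + z$2 * (\<Sum>j\<in>UNIV. H$2$j * z$j) + z$3 * (\<Sum>j\<in>UNIV. H$3$j * z$j)"
    unfolding qz_def Hij by (simp add: sum_3 Hs algebra_simps)
  also have "\<dots> = l2 * (z$1 * z$1 + z$2 * z$2 + z$3 * z$3)" unfolding z(2) by (simp add: algebra_simps)
  finally have qz_eq: "qz = l2 * (z$1 * z$1 + z$2 * z$2 + z$3 * z$3)" .
  have zn: "z$1 * z$1 + z$2 * z$2 + z$3 * z$3 > 0"
  proof -
    have "z$1 \<noteq> 0 \<or> z$2 \<noteq> 0 \<or> z$3 \<noteq> 0"
      using z(1) exhaust_3 by (metis vec_eq_iff zero_index)
    moreover have "z$1 * z$1 \<ge> 0" "z$2 * z$2 \<ge> 0" "z$3 * z$3 \<ge> 0" by simp_all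
    ultimately show ?thesis using not_real_square_gt_zero by (smt (verit))
  qed
  have qzneg: "qz < 0" using qz_eq zn l(2) by (simp add: mult_neg_pos)
  define qK where "qK = qKf h11 h12 h13 h22 h23 h33 y1 y2 y3"
  have qKzz: "qK (z$1) (z$2) (z$3) (z$1) (z$2) (z$3) < 0"
  proof -
    have "qK (z$1) (z$2) (z$3) (z$1) (z$2) (z$3) = s * qz - (b1*z$1+b2*z$2+b3*z$3)^2"
      unfolding qK_def qz_def qKf_def s_def b1_def b2_def b3_def by (simp add: algebra_simps power2_eq_square)
    moreover have "s * qz < 0" using spos qzneg by (simp add: mult_pos_neg)
    ultimately show ?thesis by (smt (verit) zero_le_power2)
  qed
  have NSD: "qK u1 u2 u3 u1 u2 u3 \<le> 0" for u1 u2 u3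
  proof (rule ccontr)
    assume "\<not> qK u1 u2 u3 u1 u2 u3 \<le> 0"
    then have gt: "qK u1 u2 u3 u1 u2 u3 > 0" by simp
    have id: "qK u1 u2 u3 u1 u2 u3 * qK (z$1) (z$2) (z$3) (z$1) (z$2) (z$3) - (qK u1 u2 u3 (z$1) (z$2) (z$3))^2
       = s * dh * (u1*(z$2*y3 - z$3*y2) - u2*(z$1*y3 - z$3*y1) + u3*(z$1*y2 - z$2*y1))^2"
      using Kid[of h11 h12 h13 h22 h23 h33 y1 y2 y3 u1 u2 u3 "z$1" "z$2" "z$3"]
      unfolding qK_def s_def b1_def b2_def b3_def dh_def .
    have "s * dh * (u1*(z$2*y3 - z$3*y2) - u2*(z$1*y3 - z$3*y1) + u3*(z$1*y2 - z$2*y1))^2 \<ge> 0"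
      using spos dhpos by simp
    moreover have "qK u1 u2 u3 u1 u2 u3 * qK (z$1) (z$2) (z$3) (z$1) (z$2) (z$3) < 0"
      using gt qKzz by (simp add: mult_pos_neg)
    ultimately show False using id by (smt (verit) zero_le_power2)
  qed
  show "\<forall>u::real^3. (\<Sum>i\<in>UNIV. \<Sum>j\<in>UNIV. (- L2 c i j y0) * u$i * u$j) \<ge> 0"
  proof
    fix u :: "real^3"
    define bu where "bu = b1*u$1+b2*u$2+b3*u$3"
    define qu where "qu = h11*u$1*u$1 + h22*u$2*u$2 + h33*u$3*u$3 + 2*h12*u$1*u$2 + 2*h13*u$1*u$3 + 2*h23*u$2*u$3"
    have "(\<Sum>i\<in>UNIV. \<Sum>j\<in>UNIV. (- L2 c i j y0) * u$i * u$j) = (- 4 * a * qu + bu^2) / (4 * a^2)"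
      using apos unfolding L2_def a_def[symmetric] bu_def qu_def
      by (simp add: sum_3 Hs D1s a_def field_simps power2_eq_square)
    also have "- 4 * a * qu + bu^2 = (- 2 * qK (u$1) (u$2) (u$3) (u$1) (u$2) (u$3) + bu^2) / 3"
      unfolding qK_def bu_def qu_def qKf_def s6[unfolded s_def b1_def b2_def b3_def] b1_def b2_def b3_def by (simp add: field_simps power2_eq_square)
    finally have eq: "(\<Sum>i\<in>UNIV. \<Sum>j\<in>UNIV. (- L2 c i j y0) * u$i * u$j) = ((- 2 * qK (u$1) (u$2) (u$3) (u$1) (u$2) (u$3) + bu^2) / 3) / (4 * a^2)" .
    have "- 2 * qK (u$1) (u$2) (u$3) (u$1) (u$2) (u$3) + bu^2 \<ge> 0" using NSD[of "u$1" "u$2" "u$3"] zero_le_power2[of bu] by linarith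
    then show "(\<Sum>i\<in>UNIV. \<Sum>j\<in>UNIV. (- L2 c i j y0) * u$i * u$j) \<ge> 0" unfolding eq by simp
  qed
  show "(- L2 c 1 1 y0) * (- L2 c 2 2 y0) * (- L2 c 3 3 y0) + (- L2 c 1 2 y0) * (- L2 c 2 3 y0) * (- L2 c 3 1 y0)
       + (- L2 c 1 3 y0) * (- L2 c 2 1 y0) * (- L2 c 3 2 y0) - (- L2 c 1 1 y0) * (- L2 c 2 3 y0) * (- L2 c 3 2 y0)
       - (- L2 c 1 2 y0) * (- L2 c 2 1 y0) * (- L2 c 3 3 y0) - (- L2 c 1 3 y0) * (- L2 c 2 2 y0) * (- L2 c 3 1 y0) \<noteq> 0"
  proof -
    have Lm: "\<And>i j. - L2 c i j y0 = (- 4 * a * D2 c y0 i j + (2 * D1 c y0 i) * (2 * D1 c y0 j)) / (4 * a^2)"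
      using apos unfolding L2_def a_def by (simp add: field_simps power2_eq_square)
    have dm: "(- 4*a*h11 + b1*b1) * (- 4*a*h22 + b2*b2) * (- 4*a*h33 + b3*b3) + (- 4*a*h12 + b1*b2) * (- 4*a*h23 + b2*b3) * (- 4*a*h13 + b3*b1)
       + (- 4*a*h13 + b1*b3) * (- 4*a*h12 + b2*b1) * (- 4*a*h23 + b3*b2) - (- 4*a*h11 + b1*b1) * (- 4*a*h23 + b2*b3) * (- 4*a*h23 + b3*b2)
       - (- 4*a*h12 + b1*b2) * (- 4*a*h12 + b2*b1) * (- 4*a*h33 + b3*b3) - (- 4*a*h13 + b1*b3) * (- 4*a*h22 + b2*b2) * (- 4*a*h13 + b3*b1)
       = - 64 * (a*a*a) * dh + 16 * (a*a) * dh * s"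
      using Did[of a h11 y1 h12 y2 h13 y3 h22 h23 h33] unfolding b1_def b2_def b3_def s_def dh_def by simp
    have e32: "- 64 * (a*a*a) * dh + 16 * (a*a) * dh * s = 32 * (a*a*a) * dh" unfolding s6 by (simp add: algebra_simps)
    have p32: "32 * (a*a*a) * dh > 0" using apos dhpos a_def by simp
    have nz: "(- 4*a*h11 + b1*b1) * (- 4*a*h22 + b2*b2) * (- 4*a*h33 + b3*b3) + (- 4*a*h12 + b1*b2) * (- 4*a*h23 + b2*b3) * (- 4*a*h13 + b3*b1)
       + (- 4*a*h13 + b1*b3) * (- 4*a*h12 + b2*b1) * (- 4*a*h23 + b3*b2) - (- 4*a*h11 + b1*b1) * (- 4*a*h23 + b2*b3) * (- 4*a*h23 + b3*b2)
       - (- 4*a*h12 + b1*b2) * (- 4*a*h12 + b2*b1) * (- 4*a*h33 + b3*b3) - (- 4*a*h13 + b1*b3) * (- 4*a*h22 + b2*b2) * (- 4*a*h13 + b3*b1) \<noteq> 0"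
      using dm e32 p32 by linarith
    have a0: "a \<noteq> 0" using apos a_def by simp
    have two: "\<And>x::real. 2 * (x / 2) = x" by simp
    have k0: "4 * a^2 \<noteq> 0" using a0 by simp
    show ?thesis
      unfolding Lm Hs D1s two det3_div
      using nz k0 by simp
  qed
qed

definition HB :: "(3\<Rightarrow>3\<Rightarrow>real) \<Rightarrow> complex^3 \<Rightarrow> complex^3 \<Rightarrow> complex" where
  "HB p u v = (\<Sum>i\<in>UNIV. \<Sum>j\<in>UNIV. complex_of_real (p i j) * u$i * cnj (v$j))"

lemma HB_real:
  assumes sym: "\<And>i j. p j i = p i j"
  shows "HB p u u = complex_of_real ((\<Sum>i\<in>UNIV. \<Sum>j\<in>UNIV. p i j * Re (u$i) * Re (u$j)) + (\<Sum>i\<in>UNIV. \<Sum>j\<in>UNIV. p i j * Im (u$i) * Im (u$j)))"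
  unfolding HB_def by (simp add: complex_eq_iff sum_3 sym algebra_simps)

lemma HB_nonneg:
  assumes sym: "\<And>i j. p j i = p i j" and psd: "\<forall>x::real^3. (\<Sum>i\<in>UNIV. \<Sum>j\<in>UNIV. p i j * x$i * x$j) \<ge> 0"
  shows "\<exists>r\<ge>0. HB p u u = complex_of_real r"
proof -
  have "(\<Sum>i\<in>UNIV. \<Sum>j\<in>UNIV. p i j * Re (u$i) * Re (u$j)) \<ge> 0"
    using psd[rule_format, of "\<chi> i. Re (u$i)"] by simp
  moreover have "(\<Sum>i\<in>UNIV. \<Sum>j\<in>UNIV. p i j * Im (u$i) * Im (u$j)) \<ge> 0"
    using psd[rule_format, of "\<chi> i. Im (u$i)"] by simp
  ultimately show ?thesis using HB_real[OF sym] by (meson add_nonneg_nonneg)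
qed

lemma HB_conj:
  assumes sym: "\<And>i j. p j i = p i j"
  shows "HB p v u = cnj (HB p u v)"
  unfolding HB_def by (simp add: sum_3 sym algebra_simps)

lemma HB_lin:
  shows "HB p (u - l *s v) (u - l *s v) = HB p u u - l * HB p v u - cnj l * HB p u v + l * cnj l * HB p v v"
  unfolding HB_def by (simp add: sum_3 algebra_simps)

lemma HB_CS:
  assumes sym: "\<And>i j. p j i = p i j" and psd: "\<forall>x::real^3. (\<Sum>i\<in>UNIV. \<Sum>j\<in>UNIV. p i j * x$i * x$j) \<ge> 0"
    and vpos: "Re (HB p v v) > 0"
  shows "Re (HB p u v * HB p v u) \<le> Re (HB p u u) * Re (HB p v v)" "Im (HB p u v * HB p v u) = 0"
proof -
  obtain ru where ru: "ru \<ge> 0" "HB p u u = complex_of_real ru" using HB_nonneg[OF sym psd] by blast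
  obtain rv where rv: "rv \<ge> 0" "HB p v v = complex_of_real rv" using HB_nonneg[OF sym psd] by blast
  define b where "b = HB p u v"
  have bc: "HB p v u = cnj b" unfolding b_def by (rule HB_conj[OF sym])
  have rvp: "rv > 0" using vpos rv by simp
  define l where "l = b / complex_of_real rv"
  obtain rw where rw: "rw \<ge> 0" "HB p (u - l *s v) (u - l *s v) = complex_of_real rw" using HB_nonneg[OF sym psd] by blast
  have "HB p (u - l *s v) (u - l *s v) = complex_of_real ru - b * cnj b / complex_of_real rv"
    unfolding HB_lin ru rv bc b_def[symmetric] l_def using rvp
    by (simp add: field_simps)
  then have "complex_of_real rw = complex_of_real ru - b * cnj b / complex_of_real rv" using rw by simp
  then have "rw = ru - (Re b ^ 2 + Im b ^ 2) / rv"
    by (simp add: complex_eq_iff complex_mult_cnj power2_eq_square)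
  then have e: "rv * rw + (Re b ^ 2 + Im b ^ 2) = ru * rv" using rvp by (simp add: field_simps)
  have "rv * rw \<ge> 0" using rw(1) rvp by simp
  then have "(Re b ^ 2 + Im b ^ 2) \<le> ru * rv" using e by linarith
  then show "Re (HB p u v * HB p v u) \<le> Re (HB p u u) * Re (HB p v v)"
    unfolding bc b_def[symmetric] ru rv by (simp add: power2_eq_square)
  show "Im (HB p u v * HB p v u) = 0" unfolding bc b_def[symmetric] by simp
qed

definition pg :: "(3\<Rightarrow>3\<Rightarrow>3\<Rightarrow>real) \<Rightarrow> real^3 \<Rightarrow> 3 \<Rightarrow> 3 \<Rightarrow> real" where
  "pg c y i j = - L2 c i j y / 4"

lemma pg_sym: "pg c y j i = pg c y i j" unfolding pg_def using L2_sym by metis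

lemma pg_psd: assumes "y \<in> index_cone (cubic c)"
  shows "\<forall>x::real^3. (\<Sum>i\<in>UNIV. \<Sum>j\<in>UNIV. pg c y i j * x$i * x$j) \<ge> 0"
proof
  fix x :: "real^3"
  have "(\<Sum>i\<in>UNIV. \<Sum>j\<in>UNIV. pg c y i j * x$i * x$j) = (\<Sum>i\<in>UNIV. \<Sum>j\<in>UNIV. (- L2 c i j y) * x$i * x$j) / 4"
    unfolding pg_def by (simp add: sum_3 field_simps)
  moreover have "(\<Sum>i\<in>UNIV. \<Sum>j\<in>UNIV. (- L2 c i j y) * x$i * x$j) \<ge> 0" using cone_facts(1)[OF assms] by blast
  ultimately show "(\<Sum>i\<in>UNIV. \<Sum>j\<in>UNIV. pg c y i j * x$i * x$j) \<ge> 0" by simp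
qed

lemma gform_HB: assumes "cubic c (Imv t) > 0"
  shows "gform (cubic c) t X Y = HB (pg c (Imv t)) X Y"
  unfolding gform_def HB_def g_eq[OF assms] pg_def using L2_sym by (simp add: mult.commute)

lemma Gm_pg: assumes "cubic c (Imv t) > 0"
  shows "Gm c t $ i $ j = complex_of_real (pg c (Imv t) i j)"
  unfolding Gm_eq[OF assms] pg_def using L2_sym by (simp add: mult.commute)

lemma Gm_inv: assumes cone: "Imv t \<in> index_cone (cubic c)"
  shows "matrix_inv (Gm c t) ** Gm c t = mat 1" "Gm c t ** matrix_inv (Gm c t) = mat 1"
proof -
  have pos: "cubic c (Imv t) > 0" using cone unfolding index_cone_def by simp
  let ?y = "Imv t"
  define E where "E = ((- L2 c 1 1 ?y) * (- L2 c 2 2 ?y) * (- L2 c 3 3 ?y) + (- L2 c 1 2 ?y) * (- L2 c 2 3 ?y) * (- L2 c 3 1 ?y)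
       + (- L2 c 1 3 ?y) * (- L2 c 2 1 ?y) * (- L2 c 3 2 ?y) - (- L2 c 1 1 ?y) * (- L2 c 2 3 ?y) * (- L2 c 3 2 ?y)
       - (- L2 c 1 2 ?y) * (- L2 c 2 1 ?y) * (- L2 c 3 3 ?y) - (- L2 c 1 3 ?y) * (- L2 c 2 2 ?y) * (- L2 c 3 1 ?y))"
  have eq: "det (Gm c t) = complex_of_real (E / 4^3)"
    unfolding det_3 Gm_pg[OF pos] pg_def E_def det3_div[symmetric] by simp
  have "E \<noteq> 0" unfolding E_def by (rule cone_facts(2)[OF cone])
  then have "complex_of_real (E / 4^3) \<noteq> 0" by simp
  then have "det (Gm c t) \<noteq> 0" unfolding eq .
  then have "invertible (Gm c t)" by (simp add: invertible_det_nz)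
  then obtain A where "Gm c t ** A = mat 1 \<and> A ** Gm c t = mat 1" unfolding invertible_def by blast
  then have "Gm c t ** matrix_inv (Gm c t) = mat 1 \<and> matrix_inv (Gm c t) ** Gm c t = mat 1"
    unfolding matrix_inv_def by (rule someI)
  then show "matrix_inv (Gm c t) ** Gm c t = mat 1" "Gm c t ** matrix_inv (Gm c t) = mat 1" by simp_all
qed

lemma tau_cnj: "tau c (cv X) (cv Y) d = cnj (tau c X Y d)"
  unfolding tau_def cv_def by simp

lemma SG_nonneg: assumes cone: "Imv t \<in> index_cone (cubic c)"
  shows "\<exists>r\<ge>0. (\<Sum>d\<in>UNIV. \<Sum>e\<in>UNIV. matrix_inv (Gm c t) $ e $ d * tau c X Y e * tau c (cv X) (cv Y) d) = complex_of_real r"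
proof -
  have pos: "cubic c (Imv t) > 0" using cone unfolding index_cone_def by simp
  define G where "G = Gm c t"
  define Gi where "Gi = matrix_inv G"
  define tv where "tv = (\<chi> e. tau c X Y e)"
  define z where "z = tv v* Gi"
  have "z v* G = tv" unfolding z_def vector_matrix_mul_assoc Gi_def G_def Gm_inv(1)[OF cone] by simp
  then have tvz: "\<And>d. tau c X Y d = (\<Sum>e\<in>UNIV. z$e * G$e$d)"
    unfolding vector_matrix_mult_def tv_def by (metis (no_types, lifting) vec_lambda_beta)
  have zd: "\<And>d. z$d = (\<Sum>e\<in>UNIV. Gi$e$d * tau c X Y e)"
    unfolding z_def vector_matrix_mult_def tv_def by (simp add: mult.commute)
  have "(\<Sum>d\<in>UNIV. \<Sum>e\<in>UNIV. Gi $ e $ d * tau c X Y e * tau c (cv X) (cv Y) d)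
      = (\<Sum>d\<in>UNIV. z$d * cnj (tau c X Y d))"
    unfolding zd tau_cnj by (simp add: sum_distrib_right)
  also have "\<dots> = (\<Sum>d\<in>UNIV. z$d * cnj (\<Sum>e\<in>UNIV. z$e * G$e$d))" unfolding tvz ..
  also have "\<dots> = HB (pg c (Imv t)) z z"
    unfolding HB_def G_def Gm_pg[OF pos] by (simp add: sum_3 pg_sym algebra_simps)
  finally have eq: "(\<Sum>d\<in>UNIV. \<Sum>e\<in>UNIV. Gi $ e $ d * tau c X Y e * tau c (cv X) (cv Y) d) = HB (pg c (Imv t)) z z" .
  obtain r where "r \<ge> 0" "HB (pg c (Imv t)) z z = complex_of_real r"
    using HB_nonneg[OF pg_sym pg_psd[OF cone]] by blast
  then show ?thesis using eq unfolding Gi_def G_def by auto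
qed

lemma bisec_bound: assumes cone: "Imv t \<in> index_cone (cubic c)"
  shows "bisec (cubic c) t X Y \<ge> -2"
proof -
  have pos: "cubic c (Imv t) > 0" using cone unfolding index_cone_def by simp
  define A where "A = cubic c (Imv t)"
  have Apos: "A > 0" using pos A_def by simp
  obtain sg where sg: "sg \<ge> 0" "(\<Sum>d\<in>UNIV. \<Sum>e\<in>UNIV. matrix_inv (Gm c t) $ e $ d * tau c X Y e * tau c (cv X) (cv Y) d) = complex_of_real sg"
    using SG_nonneg[OF cone] by blast
  have psd: "\<forall>x::real^3. (\<Sum>i\<in>UNIV. \<Sum>j\<in>UNIV. pg c (Imv t) i j * x$i * x$j) \<ge> 0" by (rule pg_psd[OF cone])
  obtain x where x: "x \<ge> 0" "gform (cubic c) t X X = complex_of_real x"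
    using HB_nonneg[OF pg_sym psd] gform_HB[OF pos] by metis
  obtain w where w: "w \<ge> 0" "gform (cubic c) t Y Y = complex_of_real w"
    using HB_nonneg[OF pg_sym psd] gform_HB[OF pos] by metis
  have RF: "Rform (cubic c) t X Y = - complex_of_real sg / (64 * (complex_of_real A)^2)
      + complex_of_real x * complex_of_real w + gform (cubic c) t X Y * gform (cubic c) t Y X"
    using Rform_final[OF pos Gm_inv[OF cone], of X Y] sg(2) x(2) w(2) A_def by simp
  show ?thesis
  proof (cases "x = 0 \<or> w = 0")
    case True
    then show ?thesis unfolding bisec_def x(2) w(2) by auto
  next
    case False
    then have xp: "x > 0" and wp: "w > 0" using x(1) w(1) by auto
    have cs: "Re (gform (cubic c) t X Y * gform (cubic c) t Y X) \<le> x * w"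
      "Im (gform (cubic c) t X Y * gform (cubic c) t Y X) = 0"
      using HB_CS[OF pg_sym psd, of Y X] gform_HB[OF pos] x(2) w(2) wp by auto
    define m where "m = Re (gform (cubic c) t X Y * gform (cubic c) t Y X)"
    have mc: "gform (cubic c) t X Y * gform (cubic c) t Y X = complex_of_real m"
      using cs(2) unfolding m_def by (simp add: complex_eq_iff)
    have "- Rform (cubic c) t X Y / (gform (cubic c) t X X * gform (cubic c) t Y Y)
       = complex_of_real ((sg / (64 * A^2) - x * w - m) / (x * w))"
      unfolding RF mc x(2) w(2) using Apos xp wp by (simp add: field_simps)
    then have b: "bisec (cubic c) t X Y = (sg / (64 * A^2) - x * w - m) / (x * w)"
      unfolding bisec_def by simp
    have "sg / (64 * A^2) \<ge> 0" using sg(1) by simp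
    then have "sg / (64 * A^2) - x * w - m \<ge> -2 * (x * w)" using cs(1) unfolding m_def by linarith
    moreover have "x * w > 0" using xp wp by simp
    ultimately show ?thesis unfolding b by (simp add: field_simps)
  qed
qed

lemma frame_complete: assumes pos: "cubic c (Imv t) > 0" and uf: "unitary_frame (cubic c) t e"
  shows "(\<Sum>a\<in>UNIV. gform (cubic c) t X (e a) * gform (cubic c) t (e a) X) = gform (cubic c) t X X"
proof -
  define G where "G = Gm c t"
  define E where "E = ((\<chi> i a. (e a)$i) :: complex^3^3)"
  define Ec where "Ec = ((\<chi> i a. cnj ((e a)$i)) :: complex^3^3)"
  have key: "\<And>a b. (transpose E ** (G ** Ec)) $ a $ b = gform (cubic c) t (e a) (e b)"
    unfolding matrix_matrix_mult_def transpose_def gform_def E_def Ec_def G_def Gm_def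
    by (simp add: sum_3 algebra_simps)
  have h1: "transpose E ** (G ** Ec) = mat 1"
    using uf unfolding unitary_frame_def by (simp add: vec_eq_iff key mat_def)
  have h2: "(G ** Ec) ** transpose E = mat 1" using h1 matrix_left_right_inverse by blast
  have h3: "G ** (Ec ** transpose E) = mat 1" using h2 by (simp add: matrix_mul_assoc)
  have h4: "(Ec ** transpose E) ** G = mat 1" using h3 matrix_left_right_inverse by blast
  have key2: "(\<Sum>a\<in>UNIV. gform (cubic c) t X (e a) * gform (cubic c) t (e a) X)
     = (\<Sum>i\<in>UNIV. \<Sum>l\<in>UNIV. (G ** ((Ec ** transpose E) ** G)) $ i $ l * X$i * cnj (X$l))"
    unfolding matrix_matrix_mult_def transpose_def gform_def E_def Ec_def G_def Gm_def
    by (simp add: sum_3 algebra_simps)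
  show ?thesis unfolding key2 h4 unfolding gform_def G_def Gm_def by simp
qed

lemma bisec_unit: assumes cone: "Imv t \<in> index_cone (cubic c)"
    and gx: "gform (cubic c) t X X = 1" and gy: "gform (cubic c) t Y Y = 1"
  shows "bisec (cubic c) t X Y \<ge> -1 - Re (gform (cubic c) t X Y * gform (cubic c) t Y X)"
proof -
  have pos: "cubic c (Imv t) > 0" using cone unfolding index_cone_def by simp
  define A where "A = cubic c (Imv t)"
  obtain sg where sg: "sg \<ge> 0" "(\<Sum>d\<in>UNIV. \<Sum>e\<in>UNIV. matrix_inv (Gm c t) $ e $ d * tau c X Y e * tau c (cv X) (cv Y) d) = complex_of_real sg"
    using SG_nonneg[OF cone] by blast
  have RF: "Rform (cubic c) t X Y = - complex_of_real sg / (64 * (complex_of_real A)^2)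
      + 1 + gform (cubic c) t X Y * gform (cubic c) t Y X"
    using Rform_final[OF pos Gm_inv[OF cone], of X Y] sg(2) gx gy A_def by simp
  have "bisec (cubic c) t X Y = sg / (64 * A^2) - 1 - Re (gform (cubic c) t X Y * gform (cubic c) t Y X)"
    unfolding bisec_def gx gy RF by simp
  moreover have "sg / (64 * A^2) \<ge> 0" using sg(1) by simp
  ultimately show ?thesis by linarith
qed

lemma ricci_bound: assumes cone: "Imv t \<in> index_cone (cubic c)"
    and uf: "unitary_frame (cubic c) t e" and gx: "gform (cubic c) t X X = 1"
  shows "ricci (cubic c) t e X \<ge> -4"
proof -
  have pos: "cubic c (Imv t) > 0" using cone unfolding index_cone_def by simp
  have ge: "\<And>a. bisec (cubic c) t X (e a) \<ge> -1 - Re (gform (cubic c) t X (e a) * gform (cubic c) t (e a) X)"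
    using bisec_unit[OF cone gx] uf unfolding unitary_frame_def by simp
  have "ricci (cubic c) t e X \<ge> (\<Sum>a\<in>UNIV. -1 - Re (gform (cubic c) t X (e a) * gform (cubic c) t (e a) X))"
    unfolding ricci_def by (rule sum_mono) (rule ge)
  also have "(\<Sum>a\<in>UNIV. -1 - Re (gform (cubic c) t X (e a) * gform (cubic c) t (e a) X))
      = -3 - Re (\<Sum>a\<in>UNIV. gform (cubic c) t X (e a) * gform (cubic c) t (e a) X)"
    by (simp add: sum_subtractf Re_sum)
  also have "\<dots> = -4" unfolding frame_complete[OF pos uf] gx by simp
  finally show ?thesis by simp
qed

lemma scalar_bound: assumes cone: "Imv t \<in> index_cone (cubic c)"
    and uf: "unitary_frame (cubic c) t e"
  shows "scalar_curv (cubic c) t e \<ge> -12"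
proof -
  have "\<And>a. ricci (cubic c) t e (e a) \<ge> -4"
    using ricci_bound[OF cone uf] uf unfolding unitary_frame_def by simp
  then have "scalar_curv (cubic c) t e \<ge> (\<Sum>a\<in>(UNIV::3 set). -4)"
    unfolding scalar_curv_def by (rule sum_mono)
  then show ?thesis by simp
qed

theorem mainTheorem4:
  fixes c :: "3 \<Rightarrow> 3 \<Rightarrow> 3 \<Rightarrow> real" and t :: "complex^3"
  assumes "Imv t \<in> index_cone (cubic c)"
  shows "(\<forall>X Y. X \<noteq> 0 \<longrightarrow> Y \<noteq> 0 \<longrightarrow> bisec (cubic c) t X Y \<ge> -2)
       \<and> (\<forall>X. X \<noteq> 0 \<longrightarrow> bisec (cubic c) t X X \<ge> -2)
       \<and> (\<forall>e X. unitary_frame (cubic c) t e \<longrightarrow> gform (cubic c) t X X = 1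
               \<longrightarrow> ricci (cubic c) t e X \<ge> -4)
       \<and> (\<forall>e. unitary_frame (cubic c) t e \<longrightarrow> scalar_curv (cubic c) t e \<ge> -12)"
  using bisec_bound[OF assms] ricci_bound[OF assms] scalar_bound[OF assms] by blast

end
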